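(* Let $H$ be a Hilbert space, $\mathcal{A}=B(H)$ and let $S$ be the unilateral shift on $H_{\mathcal{A}}$ ($Se_k=e_{k+1}$, $k\in\mathbb{N}$). Then $$\sigma^{\mathcal{A}}(S)=Z\cup W\cup\{T\in B(H)\mid T\text{ is not right invertible}\},$$ where $W$ and $Z$ are defined as follows. For $T\in B(H)$ let $N_T=\{Y\in B(H)\mid TY=0\}$ be the set of right annihilators of $T$, and for right invertible $T$ let $B_T$ denote a right inverse of $T$. $W$ is the set of all right invertible $T\in B(H)$ for which there exists a nonzero sequence $\{Y_n\}\subseteq N_T$ such that the sequence $(Y_1,\;B_TY_1+Y_2,\;B_T^2Y_1+B_TY_2+Y_3,\;\dots)$ belongs to $l_2(B(H))$. $Z$ is the set of all right invertible $T\in B(H)$ for which there is no sequence $\{Y_n\}\subseteq N_T$ such that the sequence $(B_T+Y_1,\;B_T^2+B_TY_1+Y_2,\;B_T^3+B_T^2Y_1+B_TY_2+Y_3,\;\dots)$ belongs to $l_2(B(H))$.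
   Context: For a unital $C^*$-algebra $\mathcal{A}$, $H_{\mathcal{A}}=l_2(\mathcal{A})$ is the standard Hilbert $C^*$-module of sequences $(x_1,x_2,\dots)$ in $\mathcal{A}$ with $\sum_k x_k^*x_k$ norm-convergent, inner product $\langle x,y\rangle=\sum_k x_k^*y_k$; $\{e_k\}$ is its standard orthonormal basis. $B^a(H_{\mathcal{A}})$ denotes the bounded adjointable $\mathcal{A}$-linear operators on $H_{\mathcal{A}}$. For $\alpha\in\mathcal{A}$, $\alpha I$ is the operator $(x_k)\mapsto(\alpha x_k)$. For $F\in B^a(H_{\mathcal{A}})$, $\sigma^{\mathcal{A}}(F)=\{\alpha\in\mathcal{A}\mid F-\alpha I$ is not invertible in $B^a(H_{\mathcal{A}})\}$. *)

theory Defs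
  imports "HOL-Analysis.Analysis"
begin

text \<open>A complex Hilbert space is modelled as a real Hilbert space (type class
  real_inner + complete_space) together with a complex structure J
  (multiplication by i): J o J = -id and J orthogonal.  The complex inner product
  is then x \<bullet> y + i (x \<bullet> J y) (up to convention), and the
  complex-linear bounded operators B(H) are exactly the real bounded linear
  operators commuting with J.  The Hilbert-space adjoint coincides with the
  real adjoint.\<close>

definition cstruct :: "('h::real_inner \<Rightarrow>\<^sub>L 'h) \<Rightarrow> bool" where
  "cstruct J \<longleftrightarrow> J o\<^sub>L J = - id_blinfun \<and> (\<forall>x y. inner (J x) (J y) = inner x y)"

definition BH :: "('h::real_inner \<Rightarrow>\<^sub>L 'h) \<Rightarrow> ('h \<Rightarrow>\<^sub>L 'h) set" where
  "BH J = {T. T o\<^sub>L J = J o\<^sub>L T}"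

definition adj :: "('h::real_inner \<Rightarrow>\<^sub>L 'h) \<Rightarrow> ('h \<Rightarrow>\<^sub>L 'h)" where
  "adj T = Blinfun (adjoint (blinfun_apply T))"

definition l2 :: "('h::{real_inner,complete_space} \<Rightarrow>\<^sub>L 'h) \<Rightarrow> (nat \<Rightarrow> ('h \<Rightarrow>\<^sub>L 'h)) set" where
  "l2 J = {x. (\<forall>k. x k \<in> BH J) \<and> summable (\<lambda>k. adj (x k) o\<^sub>L x k)}"

definition ip :: "(nat \<Rightarrow> ('h::{real_inner,complete_space} \<Rightarrow>\<^sub>L 'h)) \<Rightarrow> (nat \<Rightarrow> ('h \<Rightarrow>\<^sub>L 'h)) \<Rightarrow> ('h \<Rightarrow>\<^sub>L 'h)" where
  "ip x y = (\<Sum>k. adj (x k) o\<^sub>L y k)"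

definition hnorm :: "(nat \<Rightarrow> ('h::{real_inner,complete_space} \<Rightarrow>\<^sub>L 'h)) \<Rightarrow> real" where
  "hnorm x = sqrt (norm (ip x x))"

text \<open>F is a bounded adjointable A-linear operator on H_A (an element of B^a(H_A)),
  considered on the carrier l2 J.  H_A is a right A-module: x a = (x_k a).\<close>
definition badj :: "('h::{real_inner,complete_space} \<Rightarrow>\<^sub>L 'h)
    \<Rightarrow> ((nat \<Rightarrow> ('h \<Rightarrow>\<^sub>L 'h)) \<Rightarrow> (nat \<Rightarrow> ('h \<Rightarrow>\<^sub>L 'h))) \<Rightarrow> bool" where
  "badj J F \<longleftrightarrow>
     (\<forall>x\<in>l2 J. F x \<in> l2 J)
   \<and> (\<forall>x\<in>l2 J. \<forall>y\<in>l2 J. F (\<lambda>k. x k + y k) = (\<lambda>k. F x k + F y k))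
   \<and> (\<forall>x\<in>l2 J. \<forall>a\<in>BH J. F (\<lambda>k. x k o\<^sub>L a) = (\<lambda>k. F x k o\<^sub>L a))
   \<and> (\<exists>C. \<forall>x\<in>l2 J. hnorm (F x) \<le> C * hnorm x)
   \<and> (\<exists>G. (\<forall>y\<in>l2 J. G y \<in> l2 J) \<and> (\<forall>x\<in>l2 J. \<forall>y\<in>l2 J. ip (F x) y = ip x (G y)))"

definition binv :: "('h::{real_inner,complete_space} \<Rightarrow>\<^sub>L 'h)
    \<Rightarrow> ((nat \<Rightarrow> ('h \<Rightarrow>\<^sub>L 'h)) \<Rightarrow> (nat \<Rightarrow> ('h \<Rightarrow>\<^sub>L 'h))) \<Rightarrow> bool" where
  "binv J F \<longleftrightarrow> badj J F \<and> (\<exists>G. badj J G \<and> (\<forall>x\<in>l2 J. G (F x) = x \<and> F (G x) = x))"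

definition shift :: "(nat \<Rightarrow> ('h::real_normed_vector \<Rightarrow>\<^sub>L 'h)) \<Rightarrow> (nat \<Rightarrow> ('h \<Rightarrow>\<^sub>L 'h))" where
  "shift x = (\<lambda>k. case k of 0 \<Rightarrow> 0 | Suc j \<Rightarrow> x j)"

definition scalI :: "('h::real_normed_vector \<Rightarrow>\<^sub>L 'h) \<Rightarrow> (nat \<Rightarrow> ('h \<Rightarrow>\<^sub>L 'h)) \<Rightarrow> (nat \<Rightarrow> ('h \<Rightarrow>\<^sub>L 'h))" where
  "scalI a x = (\<lambda>k. a o\<^sub>L x k)"

definition Aspec :: "('h::{real_inner,complete_space} \<Rightarrow>\<^sub>L 'h)
    \<Rightarrow> ((nat \<Rightarrow> ('h \<Rightarrow>\<^sub>L 'h)) \<Rightarrow> (nat \<Rightarrow> ('h \<Rightarrow>\<^sub>L 'h))) \<Rightarrow> ('h \<Rightarrow>\<^sub>L 'h) set" where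
  "Aspec J F = {a \<in> BH J. \<not> binv J (\<lambda>x k. F x k - scalI a x k)}"

definition rinv :: "('h::real_inner \<Rightarrow>\<^sub>L 'h) \<Rightarrow> ('h \<Rightarrow>\<^sub>L 'h) \<Rightarrow> bool" where
  "rinv J T \<longleftrightarrow> (\<exists>R\<in>BH J. T o\<^sub>L R = id_blinfun)"

definition ann :: "('h::real_inner \<Rightarrow>\<^sub>L 'h) \<Rightarrow> ('h \<Rightarrow>\<^sub>L 'h) \<Rightarrow> ('h \<Rightarrow>\<^sub>L 'h) set" where
  "ann J T = {Y \<in> BH J. T o\<^sub>L Y = 0}"

definition bpow :: "('h::real_normed_vector \<Rightarrow>\<^sub>L 'h) \<Rightarrow> nat \<Rightarrow> ('h \<Rightarrow>\<^sub>L 'h)" where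
  "bpow B n = (((\<lambda>X. B o\<^sub>L X) ^^ n) id_blinfun)"

text \<open>W and Z, relative to a choice B of right inverses (B T = B_T); sequences
  indexed from 0, so the k-th term is sum_{j<=k} B_T^(k-j) Y_j.\<close>
definition Wset :: "('h::{real_inner,complete_space} \<Rightarrow>\<^sub>L 'h)
    \<Rightarrow> (('h \<Rightarrow>\<^sub>L 'h) \<Rightarrow> ('h \<Rightarrow>\<^sub>L 'h)) \<Rightarrow> ('h \<Rightarrow>\<^sub>L 'h) set" where
  "Wset J B = {T \<in> BH J. rinv J T \<and>
     (\<exists>Y. (\<forall>n. Y n \<in> ann J T) \<and> Y \<noteq> (\<lambda>_. 0) \<and>
          (\<lambda>k. \<Sum>j\<le>k. bpow (B T) (k - j) o\<^sub>L Y j) \<in> l2 J)}"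

definition Zset :: "('h::{real_inner,complete_space} \<Rightarrow>\<^sub>L 'h)
    \<Rightarrow> (('h \<Rightarrow>\<^sub>L 'h) \<Rightarrow> ('h \<Rightarrow>\<^sub>L 'h)) \<Rightarrow> ('h \<Rightarrow>\<^sub>L 'h) set" where
  "Zset J B = {T \<in> BH J. rinv J T \<and>
     \<not> (\<exists>Y. (\<forall>n. Y n \<in> ann J T) \<and>
          (\<lambda>k. bpow (B T) (Suc k) + (\<Sum>j\<le>k. bpow (B T) (k - j) o\<^sub>L Y j)) \<in> l2 J)}"

end

theory Submission
  imports Defs
begin

lemma parallelogram_h:
  fixes a b :: "'a::real_inner"
  shows "(norm (a - b))^2 + (norm (a + b))^2 = 2*(norm a)^2 + 2*(norm b)^2"
  by (simp add: power2_norm_eq_inner inner_diff_left inner_diff_right inner_add_left inner_add_right inner_commute)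

lemma closest_ortho:
  fixes M :: "'h::{real_inner,complete_space} set"
  assumes cl: "closed M" and sub: "subspace M"
  shows "\<exists>p\<in>M. \<forall>m\<in>M. inner (x - p) m = 0"
proof -
  have ne: "M \<noteq> {}" using sub subspace_0 by blast
  define d where "d = infdist x M"
  have d0: "0 \<le> d" unfolding d_def by (rule infdist_nonneg)
  have lo: "d \<le> norm (x - y)" if "y \<in> M" for y
    using infdist_le[OF that, of x] by (simp add: d_def dist_norm)
  have "\<exists>m\<in>M. (norm (x - m))^2 < d^2 + inverse (real (Suc n))" for n
  proof -
    define e where "e = min 1 (inverse (real (Suc n)) / (2*d+2))"
    have e0: "0 < e" using d0 by (simp add: e_def)
    have "infdist x M < d + e" using e0 by (simp add: d_def)
    then obtain m where m: "m \<in> M" "dist x m < d + e"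
      unfolding infdist_notempty[OF ne] using cINF_less_iff[OF ne bdd_below_image_dist] by blast
    have "norm (x - m) < d + e" using m by (simp add: dist_norm)
    hence "(norm (x - m))^2 < (d+e)^2" by (simp add: power_strict_mono)
    also have "(d+e)^2 = d^2 + e*(2*d+e)" by (simp add: power2_eq_square algebra_simps)
    also have "e*(2*d+e) \<le> e*(2*d+2)" using e0 by (simp add: e_def)
    also have "e*(2*d+2) \<le> inverse (real (Suc n))"
    proof -
      have "e \<le> inverse (real (Suc n)) / (2*d+2)" by (simp add: e_def)
      moreover have "(0::real) < 2*d+2" using d0 by simp
      ultimately show ?thesis using pos_le_divide_eq by blast
    qed
    finally show ?thesis using m by auto
  qed
  then obtain m where mM: "\<And>n. m n \<in> M" and mb: "\<And>n. (norm (x - m n))^2 < d^2 + inverse (real (Suc n))"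
    by metis
  have cau: "Cauchy m"
  proof (rule CauchyI)
    fix e :: real assume e: "0 < e"
    obtain N where N: "inverse (real (Suc N)) < e^2/4"
      using e by (metis reals_Archimedean zero_less_divide_iff zero_less_numeral zero_less_power)
    show "\<exists>M. \<forall>i\<ge>M. \<forall>j\<ge>M. norm (m i - m j) < e"
    proof (intro exI allI impI)
      fix i j assume ij: "N \<le> i" "N \<le> j"
      have inv: "inverse (real (Suc k)) \<le> inverse (real (Suc N))" if "N \<le> k" for k
        using that by (simp add: le_imp_inverse_le)
      have mid: "(m i + m j) /\<^sub>R 2 \<in> M" using mM sub
        by (simp add: subspace_add subspace_scale)
      have "x - (m i + m j) /\<^sub>R 2 = (1/2) *\<^sub>R ((x - m i) + (x - m j))"
        by (simp add: algebra_simps flip: scaleR_add_left)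
      hence h2: "norm (x - (m i + m j) /\<^sub>R 2) = norm ((x - m i) + (x - m j)) / 2"
        by simp
      have "d \<le> norm ((x - m i) + (x - m j)) / 2" using lo[OF mid] h2 by simp
      hence "(2*d)^2 \<le> (norm ((x - m i) + (x - m j)))^2"
        using d0 by (intro power_mono) auto
      moreover have "(norm ((x - m i) - (x - m j)))^2 + (norm ((x - m i) + (x - m j)))^2
          = 2*(norm (x - m i))^2 + 2*(norm (x - m j))^2" by (rule parallelogram_h)
      moreover have "(x - m i) - (x - m j) = m j - m i" by simp
      ultimately have "(norm (m j - m i))^2 \<le> 2*(norm (x - m i))^2 + 2*(norm (x - m j))^2 - 4*d^2"
        by (simp add: power2_eq_square)
      also have "\<dots> < 2*inverse (real (Suc i)) + 2*inverse (real (Suc j))"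
        using mb[of i] mb[of j] by simp
      also have "\<dots> \<le> 4 * inverse (real (Suc N))" using inv[OF ij(1)] inv[OF ij(2)] by linarith
      also have "\<dots> < e^2" using N by simp
      finally have "(norm (m i - m j))^2 < e^2" by (simp add: norm_minus_commute)
      thus "norm (m i - m j) < e" using e by (smt (verit) norm_ge_zero power_mono)
    qed
  qed
  then obtain p where lim: "m \<longlonglongrightarrow> p" using Cauchy_convergent_iff convergent_def by blast
  have pM: "p \<in> M" using cl closed_sequentially lim mM by blast
  have "(norm (x - p))^2 \<le> d^2"
  proof (rule LIMSEQ_le)
    show "(\<lambda>n. (norm (x - m n))^2) \<longlonglongrightarrow> (norm (x - p))^2"
      by (intro tendsto_intros lim)
    show "(\<lambda>n. d^2 + inverse (real (Suc n))) \<longlonglongrightarrow> d^2"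
      using tendsto_add[OF tendsto_const LIMSEQ_inverse_real_of_nat, of "d^2"] by simp
    show "\<exists>N. \<forall>n\<ge>N. (norm (x - m n))^2 \<le> d^2 + inverse (real (Suc n))"
      using mb less_imp_le by blast
  qed
  have ortho: "inner (x - p) y = 0" if yM: "y \<in> M" for y
  proof (cases "y = 0")
    case True thus ?thesis by simp
  next
    case False
    define w where "w = x - p"
    define t where "t = inner w y / (norm y)^2"
    have ny: "0 < (norm y)^2" using False by simp
    have "p + t *\<^sub>R y \<in> M" using pM yM sub by (simp add: subspace_add subspace_scale)
    hence "d \<le> norm (w - t *\<^sub>R y)" using lo unfolding w_def by (simp add: algebra_simps)
    hence "d^2 \<le> (norm (w - t *\<^sub>R y))^2" using d0 by (simp add: power_mono)
    also have "(norm (w - t *\<^sub>R y))^2 = (norm w)^2 - 2*t*inner w y + t^2 * (norm y)^2"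
      unfolding power2_norm_eq_inner by (simp add: inner_diff_left inner_diff_right inner_commute algebra_simps power2_eq_square)
    also have "t^2 * (norm y)^2 = t * inner w y" using ny by (simp add: t_def power2_eq_square)
    finally have "d^2 \<le> (norm w)^2 - t * inner w y" by simp
    with \<open>(norm (x - p))^2 \<le> d^2\<close> have "t * inner w y \<le> 0" by (simp add: w_def)
    hence "(inner w y)^2 / (norm y)^2 \<le> 0" by (simp add: t_def power2_eq_square)
    hence "(inner w y)^2 \<le> 0" using ny by (simp add: divide_le_0_iff)
    thus ?thesis by (simp add: w_def)
  qed
  show ?thesis using pM ortho by blast
qed

lemma riesz:
  fixes f :: "'h::{real_inner,complete_space} \<Rightarrow> real"
  assumes bl: "bounded_linear f"
  shows "\<exists>z. \<forall>x. f x = inner z x"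
proof (cases "\<forall>x. f x = 0")
  case True thus ?thesis by (intro exI[of _ 0]) simp
next
  case False
  then obtain x0 where fx0: "f x0 \<noteq> 0" by auto
  interpret f: bounded_linear f by (rule bl)
  let ?M = "{x. f x = 0}"
  have cl: "closed ?M"
    by (intro closed_Collect_eq continuous_on_const linear_continuous_on bl)
  have sub: "subspace ?M" unfolding subspace_def by (simp add: f.add f.scaleR f.zero)
  obtain p where pM: "p \<in> ?M" and orth: "\<forall>m\<in>?M. inner (x0 - p) m = 0"
    using closest_ortho[OF cl sub] by blast
  define w where "w = x0 - p"
  have fw: "f w = f x0" using pM by (simp add: w_def f.diff)
  hence fw0: "f w \<noteq> 0" using fx0 by simp
  hence w0: "w \<noteq> 0" by (auto simp: f.zero)
  have nw: "0 < inner w w" using w0 by simp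
  have key: "inner w v = f v / f w * inner w w" for v
  proof -
    have "v - (f v / f w) *\<^sub>R w \<in> ?M" using fw0 by (simp add: f.diff f.scaleR)
    hence "inner w (v - (f v / f w) *\<^sub>R w) = 0" using orth by (simp add: w_def)
    thus ?thesis by (simp add: inner_diff_right)
  qed
  show ?thesis
  proof (intro exI allI)
    fix v
    show "f v = inner ((f w / inner w w) *\<^sub>R w) v"
      using key[of v] fw0 nw by (simp add: field_simps)
  qed
qed

lemma adjoint_exists:
  fixes f :: "'h::{real_inner,complete_space} \<Rightarrow> 'h"
  assumes bl: "bounded_linear f"
  shows "\<forall>x y. f x \<bullet> y = x \<bullet> adjoint f y"
proof -
  interpret f: bounded_linear f by (rule bl)
  have "\<exists>g. \<forall>x. f x \<bullet> y = x \<bullet> g" for y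
  proof -
    have "bounded_linear (\<lambda>x. f x \<bullet> y)"
      by (intro bounded_linear_compose[OF bounded_linear_inner_left bl])
    from riesz[OF this] obtain z where "\<forall>x. f x \<bullet> y = z \<bullet> x" by blast
    thus ?thesis by (auto simp: inner_commute)
  qed
  then obtain g where "\<forall>y x. f x \<bullet> y = x \<bullet> g y" by metis
  hence "\<exists>f'. \<forall>x y. f x \<bullet> y = x \<bullet> f' y" by blast
  thus ?thesis unfolding adjoint_def by (rule someI_ex)
qed

lemma adjoint_bl:
  fixes f :: "'h::{real_inner,complete_space} \<Rightarrow> 'h"
  assumes bl: "bounded_linear f"
  shows "bounded_linear (adjoint f)"
proof -
  interpret f: bounded_linear f by (rule bl)
  have ad: "\<And>x y. f x \<bullet> y = x \<bullet> adjoint f y" using adjoint_exists[OF bl] by blast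
  have lin: "linear (adjoint f)"
  proof
    fix a b
    show "adjoint f (a + b) = adjoint f a + adjoint f b"
    proof (rule vector_eq_ldot[THEN iffD1], rule allI) 
      fix z show "z \<bullet> adjoint f (a + b) = z \<bullet> (adjoint f a + adjoint f b)"
        by (simp flip: ad add: inner_add_right)
    qed
  next
    fix r a
    show "adjoint f (r *\<^sub>R a) = r *\<^sub>R adjoint f a"
    proof (rule vector_eq_ldot[THEN iffD1], rule allI)
      fix z show "z \<bullet> adjoint f (r *\<^sub>R a) = z \<bullet> (r *\<^sub>R adjoint f a)"
        by (simp flip: ad)
    qed
  qed
  obtain K where K: "\<And>x. norm (f x) \<le> norm x * K" and Kp: "0 < K" using f.pos_bounded by blast
  have "norm (adjoint f y) \<le> norm y * K" for y
  proof -
    have "(norm (adjoint f y))^2 = f (adjoint f y) \<bullet> y" by (simp add: ad power2_norm_eq_inner)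
    also have "\<dots> \<le> norm (f (adjoint f y)) * norm y" by (meson Cauchy_Schwarz_ineq2 abs_ge_self order_trans)
    also have "\<dots> \<le> norm (adjoint f y) * K * norm y" using K by (simp add: mult_right_mono)
    finally have "norm (adjoint f y) * norm (adjoint f y) \<le> norm (adjoint f y) * (norm y * K)"
      by (simp add: power2_eq_square algebra_simps)
    thus ?thesis
      using Kp by (cases "adjoint f y = 0") (auto simp: mult_le_cancel_left_pos)
  qed
  thus ?thesis using lin unfolding bounded_linear_def bounded_linear_axioms_def by blast
qed

interpretation cmp: bounded_bilinear blinfun_compose
  by (rule bounded_bilinear_blinfun_compose)

lemma blinfun_Cauchy_conv:
  fixes X :: "nat \<Rightarrow> 'a::real_normed_vector \<Rightarrow>\<^sub>L 'b::{real_normed_vector,complete_space}"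
  assumes cX: "Cauchy X"
  shows "convergent X"
proof -
  have cx: "Cauchy (\<lambda>n. X n x)" for x
  proof (rule CauchyI)
    fix e :: real assume e: "0 < e"
    have "0 < e / (norm x + 1)" using e by (simp add: add_nonneg_pos)
    from CauchyD[OF cX this] obtain M where M: "\<And>m n. M \<le> m \<Longrightarrow> M \<le> n \<Longrightarrow> norm (X m - X n) < e / (norm x + 1)"
      by blast
    show "\<exists>M. \<forall>m\<ge>M. \<forall>n\<ge>M. norm (X m x - X n x) < e"
    proof (intro exI allI impI)
      fix m n assume mn: "M \<le> m" "M \<le> n"
      have "norm (X m x - X n x) = norm ((X m - X n) x)" by (simp add: blinfun.diff_left)
      also have "\<dots> \<le> norm (X m - X n) * norm x" by (rule norm_blinfun)
      also have "\<dots> \<le> e / (norm x + 1) * norm x"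
        using M[OF mn] by (intro mult_right_mono) auto
      also have "\<dots> < e"
      proof -
        have "norm x < norm x + 1" by simp
        hence "e * norm x < e * (norm x + 1)" using e by simp
        thus ?thesis by (simp add: pos_divide_less_eq add_nonneg_pos)
      qed
      finally show "norm (X m x - X n x) < e" .
    qed
  qed
  hence "\<forall>x. \<exists>l. (\<lambda>n. X n x) \<longlonglongrightarrow> l" using Cauchy_convergent_iff convergent_def by blast
  then obtain v where v: "\<And>x. (\<lambda>n. X n x) \<longlonglongrightarrow> v x" by metis
  obtain B where B: "\<And>n. norm (X n) \<le> B" and B0: "0 < B"
    using Cauchy_Bseq[OF cX] by (auto simp: Bseq_def)
  have lin: "linear v"
  proof
    fix a b
    have "(\<lambda>n. X n (a + b)) \<longlonglongrightarrow> v a + v b"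
      using tendsto_add[OF v[of a] v[of b]] by (simp add: blinfun.add_right)
    thus "v (a + b) = v a + v b" using v[of "a+b"] LIMSEQ_unique by blast
  next
    fix r a
    have "(\<lambda>n. X n (r *\<^sub>R a)) \<longlonglongrightarrow> r *\<^sub>R v a"
      using tendsto_scaleR[OF tendsto_const v[of a]] by (simp add: blinfun.scaleR_right)
    thus "v (r *\<^sub>R a) = r *\<^sub>R v a" using v[of "r *\<^sub>R a"] LIMSEQ_unique by blast
  qed
  have bd: "norm (v x) \<le> norm x * B" for x
  proof (rule tendsto_le[OF trivial_limit_sequentially tendsto_const])
    show "(\<lambda>n. norm (X n x)) \<longlonglongrightarrow> norm (v x)" by (intro tendsto_intros v)
    show "\<forall>\<^sub>F n in sequentially. norm (X n x) \<le> norm x * B"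
    proof (intro always_eventually allI)
      fix n
      have "norm (X n x) \<le> norm (X n) * norm x" by (rule norm_blinfun)
      also have "\<dots> \<le> B * norm x" using B[of n] by (intro mult_right_mono) auto
      finally show "norm (X n x) \<le> norm x * B" by (simp add: mult.commute)
    qed
  qed
  have blv: "bounded_linear v" using lin bd unfolding bounded_linear_def bounded_linear_axioms_def by blast
  define V where "V = Blinfun v"
  have Vv: "blinfun_apply V = v" unfolding V_def by (rule bounded_linear_Blinfun_apply[OF blv])
  have "X \<longlonglongrightarrow> V"
  proof (rule LIMSEQ_I)
    fix e :: real assume e: "0 < e"
    have "0 < e/2" using e by simp
    from CauchyD[OF cX this] obtain M where M: "\<And>m n. M \<le> m \<Longrightarrow> M \<le> n \<Longrightarrow> norm (X m - X n) < e/2"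
      by blast
    show "\<exists>no. \<forall>n\<ge>no. norm (X n - V) < e"
    proof (intro exI allI impI)
      fix n assume n: "M \<le> n"
      have "norm (X n - V) \<le> e/2"
      proof (rule norm_blinfun_bound)
        show "0 \<le> e/2" using e by simp
        fix x
        show "norm ((X n - V) x) \<le> e/2 * norm x"
        proof (rule tendsto_le[OF trivial_limit_sequentially tendsto_const])
          show "(\<lambda>m. norm (X n x - X m x)) \<longlonglongrightarrow> norm ((X n - V) x)"
            by (simp add: blinfun.diff_left Vv) (intro tendsto_intros v)
          show "\<forall>\<^sub>F m in sequentially. norm (X n x - X m x) \<le> e/2 * norm x"
          proof (rule eventually_sequentiallyI[of M])
            fix m assume m: "M \<le> m"
            have "norm (X n x - X m x) = norm ((X n - X m) x)" by (simp add: blinfun.diff_left)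
            also have "\<dots> \<le> norm (X n - X m) * norm x" by (rule norm_blinfun)
            also have "\<dots> \<le> e/2 * norm x" using M[OF n m] by (intro mult_right_mono) auto
            finally show "norm (X n x - X m x) \<le> e/2 * norm x" .
          qed
        qed
      qed
      thus "norm (X n - V) < e" using e by simp
    qed
  qed
  thus ?thesis unfolding convergent_def by blast
qed

lemma summable_Cauchy_h:
  fixes f :: "nat \<Rightarrow> 'a::real_normed_vector \<Rightarrow>\<^sub>L 'b::{real_normed_vector,complete_space}"
  assumes "\<forall>e>0. \<exists>N. \<forall>m\<ge>N. \<forall>n. norm (sum f {m..<n}) < e"
  shows "summable f"
proof -
  have "Cauchy (\<lambda>n. \<Sum>i<n. f i)"
  proof (rule CauchyI)
    fix e :: real assume "0 < e"
    then obtain N where N: "\<And>m n. N \<le> m \<Longrightarrow> norm (sum f {m..<n}) < e" using assms by blast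
    show "\<exists>M. \<forall>m\<ge>M. \<forall>n\<ge>M. norm ((\<Sum>i<m. f i) - (\<Sum>i<n. f i)) < e"
    proof (intro exI allI impI)
      fix m n assume mn: "N \<le> m" "N \<le> n"
      show "norm ((\<Sum>i<m. f i) - (\<Sum>i<n. f i)) < e"
      proof (cases "n \<le> m")
        case True
        have "(\<Sum>i<m. f i) - (\<Sum>i<n. f i) = sum f {n..<m}"
          using True by (metis add_diff_cancel_left' lessThan_atLeast0 sum.atLeastLessThan_concat zero_le)
        thus ?thesis using N[OF mn(2)] by simp
      next
        case False
        have "(\<Sum>i<n. f i) - (\<Sum>i<m. f i) = sum f {m..<n}"
          using False by (metis add_diff_cancel_left' lessThan_atLeast0 sum.atLeastLessThan_concat zero_le nat_le_linear)
        thus ?thesis using N[OF mn(1)] by (metis norm_minus_commute)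
      qed
    qed
  qed
  thus ?thesis unfolding summable_iff_convergent by (rule blinfun_Cauchy_conv)
qed

lemma summable_tail_small:
  fixes f :: "nat \<Rightarrow> 'a::real_normed_vector"
  assumes "summable f" "0 < e"
  shows "\<exists>N. \<forall>m\<ge>N. \<forall>n. norm (sum f {m..<n}) < e"
proof -
  have "Cauchy (\<lambda>n. \<Sum>i<n. f i)" using assms(1) summable_iff_convergent convergent_Cauchy by blast
  from CauchyD[OF this assms(2)] obtain N where N: "\<And>m n. N \<le> m \<Longrightarrow> N \<le> n \<Longrightarrow> norm ((\<Sum>i<m. f i) - (\<Sum>i<n. f i)) < e"
    by blast
  show ?thesis
  proof (intro exI allI impI)
    fix m n assume m: "N \<le> m"
    show "norm (sum f {m..<n}) < e"
    proof (cases "m \<le> n")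
      case True
      have "sum f {m..<n} = (\<Sum>i<n. f i) - (\<Sum>i<m. f i)"
        using True by (metis add_diff_cancel_left' lessThan_atLeast0 sum.atLeastLessThan_concat zero_le)
      thus ?thesis using N[of n m] m True by simp
    next
      case False thus ?thesis using assms(2) by simp
    qed
  qed
qed

lemma adj_apply:
  fixes T :: "'h::{real_inner,complete_space} \<Rightarrow>\<^sub>L 'h"
  shows "blinfun_apply (adj T) = adjoint (blinfun_apply T)"
  unfolding adj_def by (rule bounded_linear_Blinfun_apply[OF adjoint_bl[OF blinfun.bounded_linear_right]])

lemma adj_left:
  fixes T :: "'h::{real_inner,complete_space} \<Rightarrow>\<^sub>L 'h"
  shows "inner (T x) y = inner x (adj T y)"
  using adjoint_exists[OF blinfun.bounded_linear_right, of T] by (simp add: adj_apply)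

lemma adj_right:
  fixes T :: "'h::{real_inner,complete_space} \<Rightarrow>\<^sub>L 'h"
  shows "inner (adj T y) x = inner y (T x)"
  by (metis adj_left inner_commute)

lemma adj_eqI:
  fixes T U :: "'h::{real_inner,complete_space} \<Rightarrow>\<^sub>L 'h"
  assumes "\<And>x y. inner (T x) y = inner x (U y)"
  shows "adj T = U"
proof (rule blinfun_eqI)
  fix y
  show "adj T y = U y"
    by (rule vector_eq_ldot[THEN iffD1], rule allI) (simp add: assms flip: adj_left)
qed

lemma adj_adj[simp]:
  fixes T :: "'h::{real_inner,complete_space} \<Rightarrow>\<^sub>L 'h"
  shows "adj (adj T) = T"
  by (rule adj_eqI) (simp add: adj_right)

lemma adj_comp:
  fixes S T :: "'h::{real_inner,complete_space} \<Rightarrow>\<^sub>L 'h"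
  shows "adj (S o\<^sub>L T) = adj T o\<^sub>L adj S"
  by (rule adj_eqI) (simp add: adj_left)

lemma adj_add:
  fixes S T :: "'h::{real_inner,complete_space} \<Rightarrow>\<^sub>L 'h"
  shows "adj (S + T) = adj S + adj T"
  by (rule adj_eqI) (simp add: adj_left blinfun.add_left inner_add_left inner_add_right)

lemma adj_minus:
  fixes T :: "'h::{real_inner,complete_space} \<Rightarrow>\<^sub>L 'h"
  shows "adj (- T) = - adj T"
  by (rule adj_eqI) (simp add: adj_left blinfun.minus_left)

lemma adj_diff:
  fixes S T :: "'h::{real_inner,complete_space} \<Rightarrow>\<^sub>L 'h"
  shows "adj (S - T) = adj S - adj T"
  by (rule adj_eqI) (simp add: adj_left blinfun.diff_left inner_diff_left inner_diff_right)

lemma adj_zero[simp]: "adj (0 :: 'h::{real_inner,complete_space} \<Rightarrow>\<^sub>L 'h) = 0"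
  by (rule adj_eqI) simp

lemma adj_id[simp]: "adj (id_blinfun :: 'h::{real_inner,complete_space} \<Rightarrow>\<^sub>L 'h) = id_blinfun"
  by (rule adj_eqI) simp

lemma norm_sq_adj:
  fixes T :: "'h::{real_inner,complete_space} \<Rightarrow>\<^sub>L 'h"
  shows "(norm (T x))^2 = inner x ((adj T o\<^sub>L T) x)"
  by (metis adj_left power2_norm_eq_inner blinfun_apply_blinfun_compose)

lemma norm_le_sq_bound:
  fixes T :: "'h::{real_inner,complete_space} \<Rightarrow>\<^sub>L 'h"
  assumes A: "\<And>x. (norm (T x))^2 \<le> M * (norm x)^2" and M0: "0 \<le> M"
  shows "(norm T)^2 \<le> M"
proof -
  have "norm T \<le> sqrt M"
  proof (rule norm_blinfun_bound)
    show "0 \<le> sqrt M" using M0 by simp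
    fix x
    have "(norm (T x))^2 \<le> (sqrt M * norm x)^2" using A[of x] M0 by (simp add: power_mult_distrib)
    thus "norm (T x) \<le> sqrt M * norm x" using M0 by (meson power2_le_imp_le mult_nonneg_nonneg norm_ge_zero real_sqrt_ge_zero)
  qed
  thus ?thesis using M0 by (metis norm_ge_zero power_mono real_sqrt_pow2)
qed

lemma norm_sq_le_adj:
  fixes T :: "'h::{real_inner,complete_space} \<Rightarrow>\<^sub>L 'h"
  shows "(norm T)^2 \<le> norm (adj T o\<^sub>L T)"
proof (rule norm_le_sq_bound)
  fix x
  have "(norm (T x))^2 = inner x ((adj T o\<^sub>L T) x)" by (rule norm_sq_adj)
  also have "\<dots> \<le> norm x * norm ((adj T o\<^sub>L T) x)" by (meson Cauchy_Schwarz_ineq2 abs_ge_self order_trans)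
  also have "\<dots> \<le> norm x * (norm (adj T o\<^sub>L T) * norm x)" using norm_blinfun[of "adj T o\<^sub>L T" x] by (simp add: mult_left_mono)
  finally show "(norm (T x))^2 \<le> norm (adj T o\<^sub>L T) * (norm x)^2" by (simp add: power2_eq_square algebra_simps)
qed simp

lemma norm_adj_le:
  fixes T :: "'h::{real_inner,complete_space} \<Rightarrow>\<^sub>L 'h"
  shows "norm (adj T) \<le> norm T"
proof -
  have "(norm (adj T))^2 \<le> norm (adj (adj T) o\<^sub>L adj T)" by (rule norm_sq_le_adj)
  also have "\<dots> \<le> norm T * norm (adj T)" by (simp add: norm_blinfun_compose)
  finally have "norm (adj T) * norm (adj T) \<le> norm T * norm (adj T)" by (simp add: power2_eq_square)
  thus ?thesis by (cases "norm (adj T) = 0") (auto simp: mult_le_cancel_right)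
qed

lemma norm_adj[simp]:
  fixes T :: "'h::{real_inner,complete_space} \<Rightarrow>\<^sub>L 'h"
  shows "norm (adj T) = norm T"
  using norm_adj_le[of T] norm_adj_le[of "adj T"] by simp

lemma comp_assoc: "(a o\<^sub>L b) o\<^sub>L c = a o\<^sub>L (b o\<^sub>L c)"
  by (rule blinfun_eqI) simp

lemma comp_id_left[simp]: "id_blinfun o\<^sub>L a = a"
  by (rule blinfun_eqI) simp

lemma comp_id_right[simp]: "a o\<^sub>L id_blinfun = a"
  by (rule blinfun_eqI) simp

lemma adj_J:
  fixes J :: "'h::{real_inner,complete_space} \<Rightarrow>\<^sub>L 'h"
  assumes "cstruct J"
  shows "adj J = - J"
proof (rule adj_eqI)
  fix x y
  have JJ: "J (J z) = - z" for z
    using assms unfolding cstruct_def by (metis blinfun_apply_blinfun_compose blinfun_apply_id_blinfun blinfun.minus_left)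
  have orth: "inner (J a) (J b) = inner a b" for a b using assms unfolding cstruct_def by blast
  have "inner (J x) y = inner (J x) (J (- J y))" by (simp add: blinfun.minus_right JJ)
  also have "\<dots> = inner x (- J y)" by (rule orth)
  finally show "inner (J x) y = inner x ((- J) y)" by (simp add: blinfun.minus_left)
qed

lemma BH_adj:
  fixes J :: "'h::{real_inner,complete_space} \<Rightarrow>\<^sub>L 'h"
  assumes "cstruct J" "T \<in> BH J"
  shows "adj T \<in> BH J"
proof -
  have "adj (T o\<^sub>L J) = adj (J o\<^sub>L T)" using assms(2) by (simp add: BH_def)
  hence "adj J o\<^sub>L adj T = adj T o\<^sub>L adj J" by (simp add: adj_comp)
  hence "- J o\<^sub>L adj T = adj T o\<^sub>L - J" by (simp add: adj_J[OF assms(1)])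
  thus ?thesis by (simp add: BH_def cmp.minus_left cmp.minus_right)
qed

lemma BH_comp: "S \<in> BH J \<Longrightarrow> T \<in> BH J \<Longrightarrow> S o\<^sub>L T \<in> BH J"
  by (simp add: BH_def comp_assoc) (metis comp_assoc)

lemma BH_add: "S \<in> BH J \<Longrightarrow> T \<in> BH J \<Longrightarrow> S + T \<in> BH J"
  by (simp add: BH_def cmp.add_left cmp.add_right)

lemma BH_diff: "S \<in> BH J \<Longrightarrow> T \<in> BH J \<Longrightarrow> S - T \<in> BH J"
  by (simp add: BH_def cmp.diff_left cmp.diff_right)

lemma BH_minus: "T \<in> BH J \<Longrightarrow> - T \<in> BH J"
  by (simp add: BH_def cmp.minus_left cmp.minus_right)

lemma BH_zero[simp]: "0 \<in> BH J"
  by (simp add: BH_def)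

lemma BH_id[simp]: "id_blinfun \<in> BH J"
  by (simp add: BH_def)

lemma BH_sum: "(\<And>k. k \<in> K \<Longrightarrow> f k \<in> BH J) \<Longrightarrow> sum f K \<in> BH J"
  by (induction K rule: infinite_finite_induct) (auto intro: BH_add)

lemma closed_BH: "closed (BH J)"
  unfolding BH_def
  by (intro closed_Collect_eq linear_continuous_on cmp.bounded_linear_left cmp.bounded_linear_right)

lemma BH_suminf: "(\<And>k. f k \<in> BH J) \<Longrightarrow> summable f \<Longrightarrow> suminf f \<in> BH J"
  using closed_BH[of J] closed_sequentially[of "BH J" "\<lambda>n. \<Sum>i<n. f i" "suminf f"]
  by (auto intro: BH_sum simp: summable_LIMSEQ)

lemma bpow_0[simp]: "bpow B 0 = id_blinfun"
  by (simp add: bpow_def)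

lemma bpow_Suc: "bpow B (Suc n) = B o\<^sub>L bpow B n"
  by (simp add: bpow_def)

lemma bpow_BH: "B \<in> BH J \<Longrightarrow> bpow B n \<in> BH J"
  by (induction n) (auto simp: bpow_Suc intro: BH_comp)

lemma bpow_Suc': "bpow B (Suc n) = bpow B n o\<^sub>L B"
  by (induction n) (simp_all add: bpow_Suc flip: comp_assoc)

lemma bpow_add: "bpow B (m + n) = bpow B m o\<^sub>L bpow B n"
  by (induction m) (simp_all add: bpow_Suc comp_assoc)

lemma adj_left':
  fixes T :: "'h::{real_inner,complete_space} \<Rightarrow>\<^sub>L 'h"
  shows "inner x (adj T y) = inner (T x) y"
  by (simp add: adj_left)

lemma inner_Ssum:
  fixes x y :: "nat \<Rightarrow> 'h::{real_inner,complete_space} \<Rightarrow>\<^sub>L 'h"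
  shows "inner g ((\<Sum>k\<in>K. adj (x k) o\<^sub>L y k) h) = (\<Sum>k\<in>K. inner (x k g) (y k h))"
  by (simp add: blinfun.sum_left inner_sum_right adj_left')

lemma sq_sum:
  fixes x :: "nat \<Rightarrow> 'h::{real_inner,complete_space} \<Rightarrow>\<^sub>L 'h"
  shows "(\<Sum>k\<in>K. (norm (x k h))^2) = inner h ((\<Sum>k\<in>K. adj (x k) o\<^sub>L x k) h)"
  by (simp add: inner_Ssum power2_norm_eq_inner)

lemma sum_ab_le:
  fixes a b :: "'a \<Rightarrow> real"
  shows "(\<Sum>i\<in>I. a i * b i) \<le> sqrt (\<Sum>i\<in>I. (a i)^2) * sqrt (\<Sum>i\<in>I. (b i)^2)"
proof -
  have "(\<Sum>i\<in>I. a i * b i) \<le> sqrt ((\<Sum>i\<in>I. a i * b i)^2)" by simp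
  also have "\<dots> \<le> sqrt ((\<Sum>i\<in>I. (a i)^2) * (\<Sum>i\<in>I. (b i)^2))"
    by (rule real_sqrt_le_mono[OF Cauchy_Schwarz_ineq_sum])
  also have "\<dots> = sqrt (\<Sum>i\<in>I. (a i)^2) * sqrt (\<Sum>i\<in>I. (b i)^2)" by (simp add: real_sqrt_mult)
  finally show ?thesis .
qed

lemma Ssum_bound:
  fixes x y :: "nat \<Rightarrow> 'h::{real_inner,complete_space} \<Rightarrow>\<^sub>L 'h"
  assumes Mx: "0 \<le> Mx" and My: "0 \<le> My"
    and hx: "\<And>h. (\<Sum>k\<in>K. (norm (x k h))^2) \<le> Mx * (norm h)^2"
    and hy: "\<And>h. (\<Sum>k\<in>K. (norm (y k h))^2) \<le> My * (norm h)^2"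
  shows "norm (\<Sum>k\<in>K. adj (x k) o\<^sub>L y k) \<le> sqrt (Mx * My)"
proof (rule norm_blinfun_bound)
  show "0 \<le> sqrt (Mx * My)" using Mx My by simp
  fix h
  define T where "T = (\<Sum>k\<in>K. adj (x k) o\<^sub>L y k)"
  have ig: "inner g (T h) \<le> sqrt Mx * norm g * (sqrt My * norm h)" for g
  proof -
    have "inner g (T h) = (\<Sum>k\<in>K. inner (x k g) (y k h))" unfolding T_def by (rule inner_Ssum)
    also have "\<dots> \<le> (\<Sum>k\<in>K. norm (x k g) * norm (y k h))"
      by (intro sum_mono norm_cauchy_schwarz)
    also have "\<dots> \<le> sqrt (\<Sum>k\<in>K. (norm (x k g))^2) * sqrt (\<Sum>k\<in>K. (norm (y k h))^2)"
      by (rule sum_ab_le)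
    also have "\<dots> \<le> sqrt (Mx * (norm g)^2) * sqrt (My * (norm h)^2)"
      using Mx by (intro mult_mono real_sqrt_le_mono hx hy) (auto intro: sum_nonneg)
    also have "\<dots> = sqrt Mx * norm g * (sqrt My * norm h)" by (simp add: real_sqrt_mult)
    finally show ?thesis .
  qed
  have "(norm (T h))^2 \<le> sqrt Mx * norm (T h) * (sqrt My * norm h)"
    using ig[of "T h"] by (simp add: power2_norm_eq_inner)
  hence "norm (T h) * norm (T h) \<le> norm (T h) * (sqrt (Mx * My) * norm h)"
    by (simp add: power2_eq_square real_sqrt_mult algebra_simps)
  thus "norm (T h) \<le> sqrt (Mx * My) * norm h"
    using Mx My unfolding T_def by (cases "T h = 0") (auto simp: T_def mult_le_cancel_left_pos)
qed

lemma sq_le_norm: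
  fixes x :: "nat \<Rightarrow> 'h::{real_inner,complete_space} \<Rightarrow>\<^sub>L 'h"
  shows "(\<Sum>k\<in>K. (norm (x k h))^2) \<le> norm (\<Sum>k\<in>K. adj (x k) o\<^sub>L x k) * (norm h)^2"
proof -
  let ?T = "(\<Sum>k\<in>K. adj (x k) o\<^sub>L x k)"
  have "(\<Sum>k\<in>K. (norm (x k h))^2) = inner h (?T h)" by (rule sq_sum)
  also have "\<dots> \<le> norm h * norm (?T h)" by (rule norm_cauchy_schwarz)
  also have "\<dots> \<le> norm h * (norm ?T * norm h)" by (simp add: mult_left_mono norm_blinfun)
  finally show ?thesis by (simp add: power2_eq_square algebra_simps)
qed

definition usq :: "(nat \<Rightarrow> ('h::real_normed_vector \<Rightarrow>\<^sub>L 'h)) \<Rightarrow> bool" where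
  "usq x \<longleftrightarrow> (\<forall>e>0. \<exists>N. \<forall>m\<ge>N. \<forall>n h. (\<Sum>k\<in>{m..<n}. (norm (x k h))^2) \<le> e * (norm h)^2)"

definition bnd :: "(nat \<Rightarrow> ('h::real_normed_vector \<Rightarrow>\<^sub>L 'h)) \<Rightarrow> real \<Rightarrow> bool" where
  "bnd x M \<longleftrightarrow> (\<forall>n h. (\<Sum>k<n. (norm (x k h))^2) \<le> M * (norm h)^2)"

lemma l2_iff:
  fixes x :: "nat \<Rightarrow> 'h::{real_inner,complete_space} \<Rightarrow>\<^sub>L 'h"
  shows "x \<in> l2 J \<longleftrightarrow> (\<forall>k. x k \<in> BH J) \<and> usq x"
proof
  assume x: "x \<in> l2 J"
  hence sm: "summable (\<lambda>k. adj (x k) o\<^sub>L x k)" by (simp add: l2_def)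
  have "usq x" unfolding usq_def
  proof (intro allI impI)
    fix e :: real assume e: "0 < e"
    from summable_tail_small[OF sm e] obtain N where
      N: "\<forall>m\<ge>N. \<forall>n. norm (\<Sum>k\<in>{m..<n}. adj (x k) o\<^sub>L x k) < e" by blast
    show "\<exists>N. \<forall>m\<ge>N. \<forall>n h. (\<Sum>k\<in>{m..<n}. (norm (x k h))^2) \<le> e * (norm h)^2"
    proof (intro exI allI impI)
      fix m n h assume "N \<le> m"
      hence "norm (\<Sum>k\<in>{m..<n}. adj (x k) o\<^sub>L x k) \<le> e" using N less_imp_le by blast
      thus "(\<Sum>k\<in>{m..<n}. (norm (x k h))^2) \<le> e * (norm h)^2"
        using sq_le_norm[of x h "{m..<n}"] by (meson mult_right_mono order_trans zero_le_power2)
    qed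
  qed
  thus "(\<forall>k. x k \<in> BH J) \<and> usq x" using x by (simp add: l2_def)
next
  assume a: "(\<forall>k. x k \<in> BH J) \<and> usq x"
  have "summable (\<lambda>k. adj (x k) o\<^sub>L x k)"
  proof (rule summable_Cauchy_h, intro allI impI)
    fix e :: real assume e: "0 < e"
    obtain N where N: "\<And>m n h. N \<le> m \<Longrightarrow> (\<Sum>k\<in>{m..<n}. (norm (x k h))^2) \<le> (e/2) * (norm h)^2"
      using a e unfolding usq_def by (meson half_gt_zero)
    show "\<exists>N. \<forall>m\<ge>N. \<forall>n. norm (sum (\<lambda>k. adj (x k) o\<^sub>L x k) {m..<n}) < e"
    proof (intro exI allI impI)
      fix m n assume "N \<le> m"
      hence "norm (\<Sum>k\<in>{m..<n}. adj (x k) o\<^sub>L x k) \<le> sqrt (e/2 * (e/2))"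
        using e by (intro Ssum_bound N) auto
      also have "\<dots> = e/2" using e real_sqrt_abs2[of "e/2"] by simp
      finally show "norm (sum (\<lambda>k. adj (x k) o\<^sub>L x k) {m..<n}) < e" using e by simp
    qed
  qed
  thus "x \<in> l2 J" using a by (simp add: l2_def)
qed

lemma l2_summable: "x \<in> l2 J \<Longrightarrow> summable (\<lambda>k. adj (x k) o\<^sub>L x k)"
  by (simp add: l2_def)

lemma l2_BH: "x \<in> l2 J \<Longrightarrow> x k \<in> BH J"
  by (simp add: l2_def)

lemma hnorm_sq:
  fixes x :: "nat \<Rightarrow> 'h::{real_inner,complete_space} \<Rightarrow>\<^sub>L 'h"
  shows "(hnorm x)^2 = norm (\<Sum>k. adj (x k) o\<^sub>L x k)"
  by (simp add: hnorm_def ip_def)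

lemma bnd_of_l2:
  fixes x :: "nat \<Rightarrow> 'h::{real_inner,complete_space} \<Rightarrow>\<^sub>L 'h"
  assumes x: "x \<in> l2 J"
  shows "bnd x ((hnorm x)^2)"
  unfolding bnd_def
proof (intro allI)
  fix n h
  let ?A = "\<lambda>n. (\<Sum>k<n. adj (x k) o\<^sub>L x k)"
  let ?P = "(\<Sum>k. adj (x k) o\<^sub>L x k)"
  have lim: "?A \<longlonglongrightarrow> ?P" using summable_LIMSEQ[OF l2_summable[OF x]] .
  have "(\<lambda>n. inner h (?A n h)) \<longlonglongrightarrow> inner h (?P h)"
    by (intro tendsto_intros blinfun.tendsto[OF lim])
  hence "(\<lambda>n. (\<Sum>k<n. (norm (x k h))^2)) \<longlonglongrightarrow> inner h (?P h)"
    by (simp add: sq_sum)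
  moreover have "incseq (\<lambda>n. (\<Sum>k<n. (norm (x k h))^2))"
    by (intro incseq_SucI) simp
  ultimately have "(\<Sum>k<n. (norm (x k h))^2) \<le> inner h (?P h)" using incseq_le by blast
  also have "\<dots> \<le> norm h * norm (?P h)" by (rule norm_cauchy_schwarz)
  also have "\<dots> \<le> norm h * (norm ?P * norm h)" by (simp add: mult_left_mono norm_blinfun)
  also have "\<dots> = norm ?P * (norm h)^2" by (simp add: power2_eq_square)
  also have "\<dots> = (hnorm x)^2 * (norm h)^2" by (simp only: hnorm_sq)
  finally show "(\<Sum>k<n. (norm (x k h))^2) \<le> (hnorm x)^2 * (norm h)^2" .
qed

lemma hnorm_le:
  fixes x :: "nat \<Rightarrow> 'h::{real_inner,complete_space} \<Rightarrow>\<^sub>L 'h"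
  assumes x: "x \<in> l2 J" and b: "bnd x M" and M: "0 \<le> M"
  shows "hnorm x \<le> sqrt M"
proof -
  let ?A = "\<lambda>n. (\<Sum>k<n. adj (x k) o\<^sub>L x k)"
  let ?P = "(\<Sum>k. adj (x k) o\<^sub>L x k)"
  have lim: "?A \<longlonglongrightarrow> ?P" using summable_LIMSEQ[OF l2_summable[OF x]] .
  have "norm ?P \<le> M"
  proof (rule tendsto_le[OF trivial_limit_sequentially tendsto_const])
    show "(\<lambda>n. norm (?A n)) \<longlonglongrightarrow> norm ?P" by (intro tendsto_intros lim)
    show "\<forall>\<^sub>F n in sequentially. norm (?A n) \<le> M"
    proof (intro always_eventually allI)
      fix n
      have "norm (?A n) \<le> sqrt (M * M)"
        using b M unfolding bnd_def by (intro Ssum_bound) auto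
      thus "norm (?A n) \<le> M" using M by simp
    qed
  qed
  thus ?thesis by (simp add: hnorm_def ip_def)
qed

lemma hnorm_nonneg: "0 \<le> hnorm x"
  by (simp add: hnorm_def)

lemma norm_comp_le_hnorm:
  fixes x :: "nat \<Rightarrow> 'h::{real_inner,complete_space} \<Rightarrow>\<^sub>L 'h"
  assumes x: "x \<in> l2 J"
  shows "norm (x k) \<le> hnorm x"
proof -
  have "(norm (x k))^2 \<le> (hnorm x)^2"
  proof (rule norm_le_sq_bound)
    fix h
    have "(norm (x k h))^2 \<le> (\<Sum>i<Suc k. (norm (x i h))^2)" by (simp add: sum_nonneg)
    also have "\<dots> \<le> (hnorm x)^2 * (norm h)^2" using bnd_of_l2[OF x] unfolding bnd_def by blast
    finally show "(norm (x k h))^2 \<le> (hnorm x)^2 * (norm h)^2" .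
  qed simp
  thus ?thesis using hnorm_nonneg by (rule power2_le_imp_le)
qed

lemma ip_summable:
  fixes x y :: "nat \<Rightarrow> 'h::{real_inner,complete_space} \<Rightarrow>\<^sub>L 'h"
  assumes x: "x \<in> l2 J" and y: "y \<in> l2 J"
  shows "summable (\<lambda>k. adj (x k) o\<^sub>L y k)"
proof (rule summable_Cauchy_h, intro allI impI)
  fix e :: real assume e: "0 < e"
  have ux: "usq x" and uy: "usq y" using x y by (auto simp: l2_iff)
  obtain N1 where N1: "\<And>m n h. N1 \<le> m \<Longrightarrow> (\<Sum>k\<in>{m..<n}. (norm (x k h))^2) \<le> (e/2) * (norm h)^2"
    using ux e unfolding usq_def by (meson half_gt_zero)
  obtain N2 where N2: "\<And>m n h. N2 \<le> m \<Longrightarrow> (\<Sum>k\<in>{m..<n}. (norm (y k h))^2) \<le> (e/2) * (norm h)^2"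
    using uy e unfolding usq_def by (meson half_gt_zero)
  show "\<exists>N. \<forall>m\<ge>N. \<forall>n. norm (sum (\<lambda>k. adj (x k) o\<^sub>L y k) {m..<n}) < e"
  proof (intro exI[of _ "max N1 N2"] allI impI)
    fix m n assume "max N1 N2 \<le> m"
    hence "norm (\<Sum>k\<in>{m..<n}. adj (x k) o\<^sub>L y k) \<le> sqrt (e/2 * (e/2))"
      using e by (intro Ssum_bound N1 N2) auto
    also have "\<dots> = e/2" using e real_sqrt_abs2[of "e/2"] by simp
    finally show "norm (sum (\<lambda>k. adj (x k) o\<^sub>L y k) {m..<n}) < e" using e by simp
  qed
qed

lemma sq_sum_le: "(u + v)^2 \<le> 2*u^2 + 2*(v::real)^2"
  using zero_le_power2[of "u - v"] by (simp add: power2_sum power2_diff)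

lemma sum_dom:
  fixes y x1 x2 :: "nat \<Rightarrow> 'h::real_normed_vector \<Rightarrow>\<^sub>L 'h"
  assumes d: "\<And>k. norm (y k h) \<le> a * norm (x1 k h) + b * norm (x2 k h)"
  shows "(\<Sum>k\<in>K. (norm (y k h))^2) \<le> 2*a^2 * (\<Sum>k\<in>K. (norm (x1 k h))^2) + 2*b^2 * (\<Sum>k\<in>K. (norm (x2 k h))^2)"
proof -
  have "(norm (y k h))^2 \<le> 2*a^2 * (norm (x1 k h))^2 + 2*b^2 * (norm (x2 k h))^2" for k
  proof -
    have "(norm (y k h))^2 \<le> (a * norm (x1 k h) + b * norm (x2 k h))^2"
      using d[of k] by (intro power_mono) auto
    also have "\<dots> \<le> 2*a^2 * (norm (x1 k h))^2 + 2*b^2 * (norm (x2 k h))^2"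
      using sq_sum_le[of "a * norm (x1 k h)" "b * norm (x2 k h)"]
      by (simp add: power_mult_distrib)
    finally show ?thesis .
  qed
  hence "(\<Sum>k\<in>K. (norm (y k h))^2) \<le> (\<Sum>k\<in>K. 2*a^2 * (norm (x1 k h))^2 + 2*b^2 * (norm (x2 k h))^2)"
    by (rule sum_mono)
  thus ?thesis by (simp add: sum.distrib sum_distrib_left)
qed

lemma usq_dom:
  fixes y x1 x2 :: "nat \<Rightarrow> 'h::real_normed_vector \<Rightarrow>\<^sub>L 'h"
  assumes u1: "usq x1" and u2: "usq x2"
    and d: "\<And>k h. norm (y k h) \<le> a * norm (x1 k h) + b * norm (x2 k h)"
  shows "usq y"
  unfolding usq_def
proof (intro allI impI)
  fix e :: real assume e: "0 < e"
  define c where "c = 2*a^2 + 2*b^2 + 1"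
  have c: "0 < c" by (simp add: c_def add_nonneg_pos)
  have e': "0 < e / c" using e c by simp
  obtain N1 where N1: "\<And>m n h. N1 \<le> m \<Longrightarrow> (\<Sum>k\<in>{m..<n}. (norm (x1 k h))^2) \<le> (e/c) * (norm h)^2"
    using u1 e' unfolding usq_def by meson
  obtain N2 where N2: "\<And>m n h. N2 \<le> m \<Longrightarrow> (\<Sum>k\<in>{m..<n}. (norm (x2 k h))^2) \<le> (e/c) * (norm h)^2"
    using u2 e' unfolding usq_def by meson
  show "\<exists>N. \<forall>m\<ge>N. \<forall>n h. (\<Sum>k\<in>{m..<n}. (norm (y k h))^2) \<le> e * (norm h)^2"
  proof (intro exI[of _ "max N1 N2"] allI impI)
    fix m n h assume m: "max N1 N2 \<le> m"
    have "(\<Sum>k\<in>{m..<n}. (norm (y k h))^2) \<le> 2*a^2 * (\<Sum>k\<in>{m..<n}. (norm (x1 k h))^2) + 2*b^2 * (\<Sum>k\<in>{m..<n}. (norm (x2 k h))^2)"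
      by (rule sum_dom[OF d])
    also have "\<dots> \<le> 2*a^2 * ((e/c) * (norm h)^2) + 2*b^2 * ((e/c) * (norm h)^2)"
      using m by (intro add_mono mult_left_mono N1 N2) auto
    also have "\<dots> = (2*a^2 + 2*b^2) * (e/c) * (norm h)^2" by (simp add: algebra_simps)
    also have "\<dots> \<le> c * (e/c) * (norm h)^2"
      using e c by (intro mult_right_mono) (auto simp: c_def)
    also have "\<dots> = e * (norm h)^2" using c by simp
    finally show "(\<Sum>k\<in>{m..<n}. (norm (y k h))^2) \<le> e * (norm h)^2" .
  qed
qed

lemma bnd_dom:
  fixes y x1 x2 :: "nat \<Rightarrow> 'h::real_normed_vector \<Rightarrow>\<^sub>L 'h"
  assumes b1: "bnd x1 M1" and b2: "bnd x2 M2"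
    and d: "\<And>k h. norm (y k h) \<le> a * norm (x1 k h) + b * norm (x2 k h)"
  shows "bnd y (2*a^2*M1 + 2*b^2*M2)"
  unfolding bnd_def
proof (intro allI)
  fix n h
  have "(\<Sum>k<n. (norm (y k h))^2) \<le> 2*a^2 * (\<Sum>k<n. (norm (x1 k h))^2) + 2*b^2 * (\<Sum>k<n. (norm (x2 k h))^2)"
    by (rule sum_dom[OF d])
  also have "\<dots> \<le> 2*a^2 * (M1 * (norm h)^2) + 2*b^2 * (M2 * (norm h)^2)"
    using b1 b2 unfolding bnd_def by (intro add_mono mult_left_mono) auto
  finally show "(\<Sum>k<n. (norm (y k h))^2) \<le> (2*a^2*M1 + 2*b^2*M2) * (norm h)^2"
    by (simp add: algebra_simps)
qed

lemma usq_shift: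
  fixes x :: "nat \<Rightarrow> 'h::real_normed_vector \<Rightarrow>\<^sub>L 'h"
  assumes u: "usq x"
  shows "usq (shift x)"
  unfolding usq_def
proof (intro allI impI)
  fix e :: real assume "0 < e"
  then obtain N where N: "\<And>m n h. N \<le> m \<Longrightarrow> (\<Sum>k\<in>{m..<n}. (norm (x k h))^2) \<le> e * (norm h)^2"
    using u unfolding usq_def by meson
  show "\<exists>N. \<forall>m\<ge>N. \<forall>n h. (\<Sum>k\<in>{m..<n}. (norm (shift x k h))^2) \<le> e * (norm h)^2"
  proof (intro exI[of _ "Suc N"] allI impI)
    fix m n h assume m: "Suc N \<le> m"
    then obtain m' where m': "m = Suc m'" "N \<le> m'" by (cases m) auto
    show "(\<Sum>k\<in>{m..<n}. (norm (shift x k h))^2) \<le> e * (norm h)^2"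
    proof (cases n)
      case 0 thus ?thesis using N[OF m'(2), where n=0 and h=h] by simp
    next
      case (Suc n')
      have "(\<Sum>k\<in>{m..<n}. (norm (shift x k h))^2) = (\<Sum>k\<in>{m'..<n'}. (norm (x k h))^2)"
        unfolding m'(1) Suc sum.shift_bounds_Suc_ivl by (simp add: shift_def)
      thus ?thesis using N[OF m'(2)] by simp
    qed
  qed
qed

lemma bnd_shift:
  fixes x :: "nat \<Rightarrow> 'h::real_normed_vector \<Rightarrow>\<^sub>L 'h"
  assumes b: "bnd x M"
  shows "bnd (shift x) M"
  unfolding bnd_def
proof (intro allI)
  fix n h
  show "(\<Sum>k<n. (norm (shift x k h))^2) \<le> M * (norm h)^2"
  proof (cases n)
    case 0 thus ?thesis using b[unfolded bnd_def, rule_format, where n=0 and h=h] by simp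
  next
    case (Suc n')
    have "(\<Sum>k<n. (norm (shift x k h))^2) = (\<Sum>k<n'. (norm (x k h))^2)"
      unfolding Suc sum.lessThan_Suc_shift by (simp add: shift_def)
    thus ?thesis using b unfolding bnd_def by simp
  qed
qed

lemma usq_bshift:
  fixes x :: "nat \<Rightarrow> 'h::real_normed_vector \<Rightarrow>\<^sub>L 'h"
  assumes u: "usq x"
  shows "usq (\<lambda>k. x (Suc k))"
  unfolding usq_def
proof (intro allI impI)
  fix e :: real assume "0 < e"
  then obtain N where N: "\<And>m n h. N \<le> m \<Longrightarrow> (\<Sum>k\<in>{m..<n}. (norm (x k h))^2) \<le> e * (norm h)^2"
    using u unfolding usq_def by meson
  show "\<exists>N. \<forall>m\<ge>N. \<forall>n h. (\<Sum>k\<in>{m..<n}. (norm (x (Suc k) h))^2) \<le> e * (norm h)^2"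
  proof (intro exI[of _ N] allI impI)
    fix m n h assume m: "N \<le> m"
    have "(\<Sum>k\<in>{m..<n}. (norm (x (Suc k) h))^2) = (\<Sum>k\<in>{Suc m..<Suc n}. (norm (x k h))^2)"
      by (rule sum.shift_bounds_Suc_ivl[symmetric])
    thus "(\<Sum>k\<in>{m..<n}. (norm (x (Suc k) h))^2) \<le> e * (norm h)^2" using N[where m="Suc m" and n="Suc n" and h=h] m by simp
  qed
qed

lemma bnd_bshift:
  fixes x :: "nat \<Rightarrow> 'h::real_normed_vector \<Rightarrow>\<^sub>L 'h"
  assumes b: "bnd x M"
  shows "bnd (\<lambda>k. x (Suc k)) M"
  unfolding bnd_def
proof (intro allI)
  fix n h
  have "(\<Sum>k<n. (norm (x (Suc k) h))^2) \<le> (\<Sum>k<Suc n. (norm (x k h))^2)"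
    unfolding sum.lessThan_Suc_shift by simp
  also have "\<dots> \<le> M * (norm h)^2" using b unfolding bnd_def by blast
  finally show "(\<Sum>k<n. (norm (x (Suc k) h))^2) \<le> M * (norm h)^2" .
qed

lemma l2I: "(\<And>k. x k \<in> BH J) \<Longrightarrow> usq x \<Longrightarrow> x \<in> l2 J"
  by (simp add: l2_iff)

lemma l2_usq: "x \<in> l2 J \<Longrightarrow> usq x"
  by (simp add: l2_iff)

lemma l2_add:
  fixes x y :: "nat \<Rightarrow> 'h::{real_inner,complete_space} \<Rightarrow>\<^sub>L 'h"
  assumes "x \<in> l2 J" "y \<in> l2 J"
  shows "(\<lambda>k. x k + y k) \<in> l2 J"
proof (rule l2I)
  show "x k + y k \<in> BH J" for k using assms by (intro BH_add l2_BH)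
  show "usq (\<lambda>k. x k + y k)"
    by (rule usq_dom[OF l2_usq[OF assms(1)] l2_usq[OF assms(2)], where a=1 and b=1])
       (simp add: blinfun.add_left norm_triangle_ineq)
qed

lemma l2_diff:
  fixes x y :: "nat \<Rightarrow> 'h::{real_inner,complete_space} \<Rightarrow>\<^sub>L 'h"
  assumes "x \<in> l2 J" "y \<in> l2 J"
  shows "(\<lambda>k. x k - y k) \<in> l2 J"
proof (rule l2I)
  show "x k - y k \<in> BH J" for k using assms by (intro BH_diff l2_BH)
  show "usq (\<lambda>k. x k - y k)"
    by (rule usq_dom[OF l2_usq[OF assms(1)] l2_usq[OF assms(2)], where a=1 and b=1])
       (simp add: blinfun.diff_left norm_triangle_ineq4)
qed

lemma l2_lmul:
  fixes x :: "nat \<Rightarrow> 'h::{real_inner,complete_space} \<Rightarrow>\<^sub>L 'h"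
  assumes "c \<in> BH J" "x \<in> l2 J"
  shows "(\<lambda>k. c o\<^sub>L x k) \<in> l2 J"
proof (rule l2I)
  show "c o\<^sub>L x k \<in> BH J" for k using assms by (blast intro: BH_comp l2_BH)
  show "usq (\<lambda>k. c o\<^sub>L x k)"
    by (rule usq_dom[OF l2_usq[OF assms(2)] l2_usq[OF assms(2)], where a="norm c" and b=0])
       (simp add: norm_blinfun)
qed

lemma l2_minus:
  fixes x :: "nat \<Rightarrow> 'h::{real_inner,complete_space} \<Rightarrow>\<^sub>L 'h"
  assumes "x \<in> l2 J"
  shows "(\<lambda>k. - x k) \<in> l2 J"
proof (rule l2I)
  show "- x k \<in> BH J" for k using assms by (intro BH_minus l2_BH)
  show "usq (\<lambda>k. - x k)"
    by (rule usq_dom[OF l2_usq[OF assms(1)] l2_usq[OF assms(1)], where a=1 and b=0])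
       (simp add: blinfun.minus_left)
qed

lemma l2_rmul:
  fixes x :: "nat \<Rightarrow> 'h::{real_inner,complete_space} \<Rightarrow>\<^sub>L 'h"
  assumes c: "c \<in> BH J" and x: "x \<in> l2 J"
  shows "(\<lambda>k. x k o\<^sub>L c) \<in> l2 J"
proof (rule l2I)
  show "x k o\<^sub>L c \<in> BH J" for k using assms by (blast intro: BH_comp l2_BH)
  show "usq (\<lambda>k. x k o\<^sub>L c)"
    unfolding usq_def
  proof (intro allI impI)
    fix e :: real assume e: "0 < e"
    define d where "d = (norm c)^2 + 1"
    have d: "0 < d" by (simp add: d_def add_nonneg_pos)
    obtain N where N: "\<And>m n h. N \<le> m \<Longrightarrow> (\<Sum>k\<in>{m..<n}. (norm (x k h))^2) \<le> (e/d) * (norm h)^2"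
      using l2_usq[OF x] e d unfolding usq_def by (meson divide_pos_pos)
    show "\<exists>N. \<forall>m\<ge>N. \<forall>n h. (\<Sum>k\<in>{m..<n}. (norm ((x k o\<^sub>L c) h))^2) \<le> e * (norm h)^2"
    proof (intro exI[of _ N] allI impI)
      fix m n h assume m: "N \<le> m"
      have "(\<Sum>k\<in>{m..<n}. (norm ((x k o\<^sub>L c) h))^2) = (\<Sum>k\<in>{m..<n}. (norm (x k (c h)))^2)" by simp
      also have "\<dots> \<le> (e/d) * (norm (c h))^2" using N[OF m] by blast
      also have "\<dots> \<le> (e/d) * (d * (norm h)^2)"
      proof (intro mult_left_mono)
        have "(norm (c h))^2 \<le> (norm c * norm h)^2" by (intro power_mono norm_blinfun) auto
        also have "\<dots> \<le> d * (norm h)^2" by (simp add: d_def power_mult_distrib algebra_simps)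
        finally show "(norm (c h))^2 \<le> d * (norm h)^2" .
      qed (use e d in simp)
      also have "\<dots> = e * (norm h)^2" using d by simp
      finally show "(\<Sum>k\<in>{m..<n}. (norm ((x k o\<^sub>L c) h))^2) \<le> e * (norm h)^2" .
    qed
  qed
qed

lemma l2_shift:
  fixes x :: "nat \<Rightarrow> 'h::{real_inner,complete_space} \<Rightarrow>\<^sub>L 'h"
  assumes "x \<in> l2 J"
  shows "shift x \<in> l2 J"
proof (rule l2I)
  show "shift x k \<in> BH J" for k using assms by (cases k) (auto simp: shift_def intro: l2_BH)
  show "usq (shift x)" by (rule usq_shift[OF l2_usq[OF assms]])
qed

lemma l2_bshift:
  fixes x :: "nat \<Rightarrow> 'h::{real_inner,complete_space} \<Rightarrow>\<^sub>L 'h"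
  assumes "x \<in> l2 J"
  shows "(\<lambda>k. x (Suc k)) \<in> l2 J"
proof (rule l2I)
  show "x (Suc k) \<in> BH J" for k using assms by (auto intro: l2_BH)
  show "usq (\<lambda>k. x (Suc k))" by (rule usq_bshift[OF l2_usq[OF assms]])
qed

lemma l2_zero: "(\<lambda>k. 0) \<in> l2 J"
  by (rule l2I) (auto simp: usq_def)

lemma l2_e0: "(\<lambda>k. if k = 0 then id_blinfun else 0) \<in> l2 J"
proof (rule l2I)
  show "usq (\<lambda>k. if k = 0 then id_blinfun else 0)"
    unfolding usq_def
  proof (intro allI impI exI[of _ "1::nat"])
    fix e :: real and m n :: nat and h assume "0 < e" "1 \<le> m"
    thus "(\<Sum>k\<in>{m..<n}. (norm ((if k = 0 then id_blinfun else 0) h))^2) \<le> e * (norm h)^2"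
      by (simp add: sum.neutral)
  qed
qed simp

definition Fop :: "('h::real_normed_vector \<Rightarrow>\<^sub>L 'h) \<Rightarrow> (nat \<Rightarrow> ('h \<Rightarrow>\<^sub>L 'h)) \<Rightarrow> (nat \<Rightarrow> ('h \<Rightarrow>\<^sub>L 'h))" where
  "Fop a = (\<lambda>x k. shift x k - scalI a x k)"

lemma Fop_0[simp]: "Fop a x 0 = - (a o\<^sub>L x 0)"
  by (simp add: Fop_def shift_def scalI_def)

lemma Fop_Suc[simp]: "Fop a x (Suc k) = x k - (a o\<^sub>L x (Suc k))"
  by (simp add: Fop_def shift_def scalI_def)

lemma Fop_alt: "Fop a x = (\<lambda>k. shift x k - (a o\<^sub>L x k))"
  by (simp add: Fop_def scalI_def)

definition Fadj :: "('h::{real_inner,complete_space} \<Rightarrow>\<^sub>L 'h) \<Rightarrow> (nat \<Rightarrow> ('h \<Rightarrow>\<^sub>L 'h)) \<Rightarrow> (nat \<Rightarrow> ('h \<Rightarrow>\<^sub>L 'h))" where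
  "Fadj a y = (\<lambda>k. y (Suc k) - (adj a o\<^sub>L y k))"

lemma Fop_l2:
  fixes x :: "nat \<Rightarrow> 'h::{real_inner,complete_space} \<Rightarrow>\<^sub>L 'h"
  assumes "a \<in> BH J" "x \<in> l2 J"
  shows "Fop a x \<in> l2 J"
  unfolding Fop_alt using assms by (intro l2_diff l2_shift l2_lmul)

lemma Fadj_l2:
  fixes y :: "nat \<Rightarrow> 'h::{real_inner,complete_space} \<Rightarrow>\<^sub>L 'h"
  assumes "cstruct J" "a \<in> BH J" "y \<in> l2 J"
  shows "Fadj a y \<in> l2 J"
  unfolding Fadj_def using assms by (intro l2_diff l2_bshift l2_lmul BH_adj)

lemma Fop_ip:
  fixes x y :: "nat \<Rightarrow> 'h::{real_inner,complete_space} \<Rightarrow>\<^sub>L 'h"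
  assumes J: "cstruct J" and a: "a \<in> BH J" and x: "x \<in> l2 J" and y: "y \<in> l2 J"
  shows "ip (Fop a x) y = ip x (Fadj a y)"
proof -
  define t1 where "t1 = (\<lambda>k. adj (shift x k) o\<^sub>L y k)"
  define t2 where "t2 = (\<lambda>k. adj (x k) o\<^sub>L (adj a o\<^sub>L y k))"
  have s1: "summable (\<lambda>k. adj (x k) o\<^sub>L y (Suc k))"
    by (rule ip_summable[OF x l2_bshift[OF y]])
  have s2: "summable t2" unfolding t2_def
    by (rule ip_summable[OF x l2_lmul[OF BH_adj[OF J a] y]])
  have t1S: "t1 (Suc k) = adj (x k) o\<^sub>L y (Suc k)" for k by (simp add: t1_def shift_def)
  have t10: "t1 0 = 0" by (simp add: t1_def shift_def)
  have "summable (\<lambda>k. t1 (Suc k))" using s1 by (simp add: t1S)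
  hence st1: "summable t1" by (simp only: summable_Suc_iff)
  have et1: "suminf t1 = (\<Sum>k. adj (x k) o\<^sub>L y (Suc k))"
    using suminf_split_head[OF st1] by (simp add: t1S t10)
  have "ip (Fop a x) y = (\<Sum>k. t1 k - t2 k)"
    unfolding ip_def Fop_alt t1_def t2_def
    by (simp add: adj_diff adj_comp cmp.diff_left comp_assoc)
  also have "\<dots> = suminf t1 - suminf t2" using suminf_diff[OF st1 s2] by simp
  also have "\<dots> = (\<Sum>k. (adj (x k) o\<^sub>L y (Suc k)) - (adj (x k) o\<^sub>L (adj a o\<^sub>L y k)))"
    unfolding et1 t2_def using suminf_diff[OF s1 s2[unfolded t2_def]] by simp
  also have "\<dots> = ip x (Fadj a y)"
    unfolding ip_def Fadj_def by (simp add: cmp.diff_right)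
  finally show ?thesis .
qed

lemma badj_Fop:
  fixes J :: "'h::{real_inner,complete_space} \<Rightarrow>\<^sub>L 'h"
  assumes J: "cstruct J" and a: "a \<in> BH J"
  shows "badj J (Fop a)"
  unfolding badj_def
proof (intro conjI ballI)
  fix x assume "x \<in> l2 J" thus "Fop a x \<in> l2 J" using a by (rule Fop_l2[rotated])
next
  fix x y
  show "Fop a (\<lambda>k. x k + y k) = (\<lambda>k. Fop a x k + Fop a y k)"
    by (rule ext, case_tac k) (simp_all add: cmp.add_right)
next
  fix x c
  show "Fop a (\<lambda>k. x k o\<^sub>L c) = (\<lambda>k. Fop a x k o\<^sub>L c)"
    by (rule ext, case_tac k) (simp_all add: cmp.diff_left cmp.minus_left comp_assoc)
next
  show "\<exists>C. \<forall>x\<in>l2 J. hnorm (Fop a x) \<le> C * hnorm x"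
  proof (intro exI ballI)
    fix x assume x: "x \<in> l2 J"
    let ?H = "(hnorm x)^2"
    have b: "bnd (Fop a x) (2*1^2*?H + 2*(norm a)^2*?H)"
    proof (rule bnd_dom[OF bnd_shift[OF bnd_of_l2[OF x]] bnd_of_l2[OF x]])
      fix k h
      show "norm (Fop a x k h) \<le> 1 * norm (shift x k h) + norm a * norm (x k h)"
      proof -
        have "norm (Fop a x k h) = norm (shift x k h - a (x k h))"
          by (simp add: Fop_alt blinfun.diff_left)
        also have "\<dots> \<le> norm (shift x k h) + norm (a (x k h))" by (rule norm_triangle_ineq4)
        also have "\<dots> \<le> 1 * norm (shift x k h) + norm a * norm (x k h)"
          using norm_blinfun[of a "x k h"] by simp
        finally show ?thesis .
      qed
    qed
    have "hnorm (Fop a x) \<le> sqrt (2*1^2*?H + 2*(norm a)^2*?H)"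
      by (rule hnorm_le[OF Fop_l2[OF a x] b]) simp
    also have "\<dots> = sqrt ((2 + 2*(norm a)^2) * (hnorm x)^2)"
      by (simp add: algebra_simps)
    also have "\<dots> = sqrt (2 + 2*(norm a)^2) * hnorm x"
      by (simp only: real_sqrt_mult real_sqrt_abs abs_of_nonneg[OF hnorm_nonneg])
    finally show "hnorm (Fop a x) \<le> sqrt (2 + 2*(norm a)^2) * hnorm x" .
  qed
next
  show "\<exists>G. (\<forall>y\<in>l2 J. G y \<in> l2 J) \<and> (\<forall>x\<in>l2 J. \<forall>y\<in>l2 J. ip (Fop a x) y = ip x (G y))"
    using Fadj_l2[OF J a] Fop_ip[OF J a] by blast
qed

lemma rinv_bpow: "a o\<^sub>L b = id_blinfun \<Longrightarrow> a o\<^sub>L bpow b (Suc n) = bpow b n"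
  by (simp add: bpow_Suc flip: comp_assoc)

definition zs :: "('h::real_normed_vector \<Rightarrow>\<^sub>L 'h) \<Rightarrow> (nat \<Rightarrow> ('h \<Rightarrow>\<^sub>L 'h)) \<Rightarrow> nat \<Rightarrow> ('h \<Rightarrow>\<^sub>L 'h)" where
  "zs b Y k = (\<Sum>j\<le>k. bpow b (k - j) o\<^sub>L Y j)"

lemma zs_0[simp]: "zs b Y 0 = Y 0"
  by (simp add: zs_def)

lemma zs_Suc: "zs b Y (Suc k) = (b o\<^sub>L zs b Y k) + Y (Suc k)"
proof -
  have "zs b Y (Suc k) = (\<Sum>j\<le>k. bpow b (Suc k - j) o\<^sub>L Y j) + (bpow b 0 o\<^sub>L Y (Suc k))"
    by (simp add: zs_def)
  also have "(\<Sum>j\<le>k. bpow b (Suc k - j) o\<^sub>L Y j) = (\<Sum>j\<le>k. b o\<^sub>L (bpow b (k - j) o\<^sub>L Y j))"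
    by (intro sum.cong refl) (simp add: Suc_diff_le bpow_Suc comp_assoc)
  also have "\<dots> = b o\<^sub>L zs b Y k" by (simp add: zs_def cmp.sum_right)
  finally show ?thesis by simp
qed

lemma zs_eta: "(\<lambda>k. \<Sum>j\<le>k. bpow b (k - j) o\<^sub>L Y j) = zs b Y"
  by (simp add: zs_def fun_eq_iff)

lemma zs_zero: "zs b (\<lambda>k. 0) = (\<lambda>k. 0)"
  by (simp add: zs_def fun_eq_iff)

lemma Fop_zero[simp]: "Fop a (\<lambda>k. 0) = (\<lambda>k. 0)"
  by (simp add: Fop_def shift_def scalI_def fun_eq_iff split: nat.split)

lemma Fop_zs:
  assumes ab: "a o\<^sub>L b = id_blinfun" and Y: "\<And>j. a o\<^sub>L Y j = 0"
  shows "Fop a (zs b Y) = (\<lambda>k. 0)"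
proof (rule ext)
  fix k show "Fop a (zs b Y) k = 0"
  proof (cases k)
    case 0 thus ?thesis by (simp add: Y)
  next
    case (Suc j)
    have "a o\<^sub>L zs b Y (Suc j) = zs b Y j"
      by (simp add: zs_Suc cmp.add_right Y ab flip: comp_assoc)
    thus ?thesis using Suc by simp
  qed
qed

lemma zs_zero_imp:
  assumes "zs b Y = (\<lambda>k. 0)"
  shows "Y = (\<lambda>k. 0)"
proof (rule ext)
  fix k show "Y k = 0"
  proof (cases k)
    case 0 thus ?thesis using assms zs_0[of b Y] by metis
  next
    case (Suc j)
    have "zs b Y (Suc j) = (b o\<^sub>L zs b Y j) + Y (Suc j)" by (rule zs_Suc)
    thus ?thesis using assms Suc by simp
  qed
qed

definition e0 :: "nat \<Rightarrow> ('h::real_normed_vector \<Rightarrow>\<^sub>L 'h)" where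
  "e0 = (\<lambda>k. if k = 0 then id_blinfun else 0)"

lemma shift_0[simp]: "shift x 0 = 0" by (simp add: shift_def)
lemma shift_Suc[simp]: "shift x (Suc k) = x k" by (simp add: shift_def)
lemma e0_0[simp]: "e0 0 = id_blinfun" by (simp add: e0_def)
lemma e0_Suc[simp]: "e0 (Suc k) = 0" by (simp add: e0_def)

lemma binvD:
  assumes "binv J F"
  obtains G where "\<And>y. y \<in> l2 J \<Longrightarrow> G y \<in> l2 J" "\<And>x. x \<in> l2 J \<Longrightarrow> G (F x) = x"
    "\<And>x. x \<in> l2 J \<Longrightarrow> F (G x) = x"
proof -
  from assms obtain G where g: "badj J G" and i: "\<forall>x\<in>l2 J. G (F x) = x \<and> F (G x) = x"
    unfolding binv_def by blast
  from g have "\<forall>y\<in>l2 J. G y \<in> l2 J" unfolding badj_def by blast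
  thus ?thesis using i that by blast
qed

lemma Aspec_iff: "a \<in> Aspec J shift \<longleftrightarrow> a \<in> BH J \<and> \<not> binv J (Fop a)"
  by (simp add: Aspec_def Fop_def)

lemma notrinv_spec:
  fixes J :: "'h::{real_inner,complete_space} \<Rightarrow>\<^sub>L 'h"
  assumes a: "a \<in> BH J" and nr: "\<not> rinv J a"
  shows "a \<in> Aspec J shift"
  unfolding Aspec_iff
proof (intro conjI a notI)
  assume "binv J (Fop a)"
  then obtain G where G1: "\<And>y. y \<in> l2 J \<Longrightarrow> G y \<in> l2 J" and G2: "\<And>x. x \<in> l2 J \<Longrightarrow> G (Fop a x) = x"
     and G3: "\<And>x. x \<in> l2 J \<Longrightarrow> Fop a (G x) = x"
    by (elim binvD) blast
  define x where "x = G e0"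
  have e0l: "e0 \<in> l2 J" unfolding e0_def by (rule l2_e0)
  have x: "x \<in> l2 J" unfolding x_def by (rule G1[OF e0l])
  have "Fop a x 0 = e0 0" unfolding x_def using G3[OF e0l] by simp
  hence "- (a o\<^sub>L x 0) = id_blinfun" by (simp add: e0_def)
  hence "a o\<^sub>L (- x 0) = id_blinfun" by (simp add: cmp.minus_right)
  moreover have "- x 0 \<in> BH J" using x by (intro BH_minus l2_BH)
  ultimately have "rinv J a" unfolding rinv_def by blast
  thus False using nr by simp
qed

lemma W_spec:
  fixes J :: "'h::{real_inner,complete_space} \<Rightarrow>\<^sub>L 'h"
  assumes B: "\<forall>T\<in>BH J. rinv J T \<longrightarrow> B T \<in> BH J \<and> T o\<^sub>L B T = id_blinfun"
    and aW: "a \<in> Wset J B"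
  shows "a \<in> Aspec J shift"
proof -
  from aW have a: "a \<in> BH J" and r: "rinv J a" and
    ex: "\<exists>Y. (\<forall>n. Y n \<in> ann J a) \<and> Y \<noteq> (\<lambda>_. 0) \<and> zs (B a) Y \<in> l2 J"
    unfolding Wset_def zs_eta by auto
  then obtain Y where Y: "\<And>n. Y n \<in> ann J a" and Y0: "Y \<noteq> (\<lambda>_. 0)" and z: "zs (B a) Y \<in> l2 J"
    by blast
  have ab: "a o\<^sub>L B a = id_blinfun" using B a r by blast
  have aY: "a o\<^sub>L Y j = 0" for j using Y[of j] by (simp add: ann_def)
  show ?thesis unfolding Aspec_iff
  proof (intro conjI a notI)
    assume "binv J (Fop a)"
    then obtain G where G1: "\<And>y. y \<in> l2 J \<Longrightarrow> G y \<in> l2 J" and G2: "\<And>x. x \<in> l2 J \<Longrightarrow> G (Fop a x) = x"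
     and G3: "\<And>x. x \<in> l2 J \<Longrightarrow> Fop a (G x) = x"
      by (elim binvD) blast
    have "zs (B a) Y = G (Fop a (zs (B a) Y))" using G2[OF z] by simp
    also have "\<dots> = G (Fop a (\<lambda>k. 0))" by (simp add: Fop_zs[OF ab aY])
    also have "\<dots> = (\<lambda>k. 0)" by (rule G2[OF l2_zero])
    finally have "Y = (\<lambda>k. 0)" by (rule zs_zero_imp)
    thus False using Y0 by simp
  qed
qed

lemma useq_Suc:
  assumes ab: "a o\<^sub>L b = id_blinfun" and Y: "\<And>j. a o\<^sub>L Y j = 0"
  shows "a o\<^sub>L (bpow b (Suc (Suc k)) + zs b Y (Suc k)) = bpow b (Suc k) + zs b Y k"
  by (simp add: zs_Suc cmp.add_right rinv_bpow[OF ab] Y ab flip: comp_assoc)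

lemma useq_0:
  assumes ab: "a o\<^sub>L b = id_blinfun" and Y: "\<And>j. a o\<^sub>L Y j = 0"
  shows "a o\<^sub>L (bpow b (Suc 0) + zs b Y 0) = id_blinfun"
  by (simp add: cmp.add_right rinv_bpow[OF ab] Y)

lemma Z_spec:
  fixes J :: "'h::{real_inner,complete_space} \<Rightarrow>\<^sub>L 'h"
  assumes B: "\<forall>T\<in>BH J. rinv J T \<longrightarrow> B T \<in> BH J \<and> T o\<^sub>L B T = id_blinfun"
    and aZ: "a \<in> Zset J B"
  shows "a \<in> Aspec J shift"
proof -
  from aZ have a: "a \<in> BH J" and r: "rinv J a" and
    nex: "\<not> (\<exists>Y. (\<forall>n. Y n \<in> ann J a) \<and> (\<lambda>k. bpow (B a) (Suc k) + zs (B a) Y k) \<in> l2 J)"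
    unfolding Zset_def zs_def by auto
  define b where "b = B a"
  have ab: "a o\<^sub>L b = id_blinfun" and bB: "b \<in> BH J" using B a r unfolding b_def by blast+
  show ?thesis unfolding Aspec_iff
  proof (intro conjI a notI)
    assume "binv J (Fop a)"
    then obtain G where G1: "\<And>y. y \<in> l2 J \<Longrightarrow> G y \<in> l2 J" and G2: "\<And>x. x \<in> l2 J \<Longrightarrow> G (Fop a x) = x"
     and G3: "\<And>x. x \<in> l2 J \<Longrightarrow> Fop a (G x) = x"
      by (elim binvD) blast
    have e0l: "e0 \<in> l2 J" unfolding e0_def by (rule l2_e0)
    define u where "u = (\<lambda>k. - G e0 k)"
    have ul: "u \<in> l2 J" unfolding u_def by (rule l2_minus[OF G1[OF e0l]])
    have Fe: "Fop a (G e0) = e0" by (rule G3[OF e0l])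
    have au0: "a o\<^sub>L u 0 = id_blinfun"
      using fun_cong[OF Fe, of 0] by (simp add: u_def e0_def cmp.minus_right)
    have auS: "a o\<^sub>L u (Suc k) = u k" for k
      using fun_cong[OF Fe, of "Suc k"] by (simp add: u_def e0_def cmp.minus_right)
    define Y where "Y = (\<lambda>k. case k of 0 \<Rightarrow> u 0 - b | Suc j \<Rightarrow> u (Suc j) - (b o\<^sub>L u j))"
    have Yann: "Y n \<in> ann J a" for n
    proof (cases n)
      case 0 thus ?thesis using ul bB au0 ab
        by (simp add: Y_def ann_def cmp.diff_right BH_diff l2_BH)
    next
      case (Suc j) thus ?thesis using ul bB auS ab
        by (simp add: Y_def ann_def cmp.diff_right BH_diff BH_comp l2_BH flip: comp_assoc)
    qed
    have "bpow b (Suc k) + zs b Y k = u k" for k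
    proof (induction k)
      case 0 show ?case by (simp add: Y_def bpow_Suc)
    next
      case (Suc k)
      have "bpow b (Suc (Suc k)) + zs b Y (Suc k) = (b o\<^sub>L (bpow b (Suc k) + zs b Y k)) + Y (Suc k)"
        by (simp add: zs_Suc bpow_Suc[of b "Suc k"] cmp.add_right)
      also have "\<dots> = u (Suc k)" using Suc.IH by (simp add: Y_def)
      finally show ?case .
    qed
    hence eq: "(\<lambda>k. bpow b (Suc k) + zs b Y k) = u" by (simp add: fun_eq_iff)
    show False using nex[folded b_def] Yann ul eq by blast
  qed
qed

lemma dir2_reduce:
  fixes J :: "'h::{real_inner,complete_space} \<Rightarrow>\<^sub>L 'h"
  assumes B: "\<forall>T\<in>BH J. rinv J T \<longrightarrow> B T \<in> BH J \<and> T o\<^sub>L B T = id_blinfun"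
    and a: "a \<in> BH J" and r: "rinv J a" and nW: "a \<notin> Wset J B" and nZ: "a \<notin> Zset J B"
  shows "\<exists>\<beta>. \<beta> \<in> BH J \<and> a o\<^sub>L \<beta> = id_blinfun \<and> \<beta> o\<^sub>L a = id_blinfun \<and> (\<lambda>k. bpow \<beta> (Suc k)) \<in> l2 J"
proof -
  define b where "b = B a"
  have ab: "a o\<^sub>L b = id_blinfun" and bB: "b \<in> BH J" using B a r unfolding b_def by blast+
  from nZ a r obtain Y where Y: "\<And>n. Y n \<in> ann J a" and ul: "(\<lambda>k. bpow b (Suc k) + zs b Y k) \<in> l2 J"
    unfolding Zset_def zs_def b_def by blast
  define u where "u = (\<lambda>k. bpow b (Suc k) + zs b Y k)"
  have aY: "a o\<^sub>L Y j = 0" for j using Y[of j] by (simp add: ann_def)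
  have ul: "u \<in> l2 J" using ul by (simp add: u_def)
  have au0: "a o\<^sub>L u 0 = id_blinfun" unfolding u_def by (rule useq_0[OF ab aY])
  have auS: "a o\<^sub>L u (Suc k) = u k" for k unfolding u_def by (rule useq_Suc[OF ab aY])
  have e0l: "e0 \<in> l2 J" unfolding e0_def by (rule l2_e0)
  define v where "v = (\<lambda>k. (shift u k + e0 k) - (u k o\<^sub>L a))"
  have vl: "v \<in> l2 J" unfolding v_def
    by (intro l2_diff l2_add l2_shift l2_rmul a ul e0l)
  have auk: "a o\<^sub>L u k = shift u k + e0 k" for k
    by (cases k) (simp_all add: au0 auS shift_def e0_def)
  have av0: "a o\<^sub>L v 0 = 0"
    by (simp add: v_def shift_def e0_def cmp.diff_right au0 flip: comp_assoc)
  have avS: "a o\<^sub>L v (Suc k) = v k" for k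
  proof -
    have "a o\<^sub>L v (Suc k) = (a o\<^sub>L u k) - ((a o\<^sub>L u (Suc k)) o\<^sub>L a)"
      by (simp add: v_def cmp.diff_right comp_assoc)
    also have "\<dots> = v k" by (simp add: auS auk v_def)
    finally show ?thesis .
  qed
  define Y' where "Y' = (\<lambda>k. case k of 0 \<Rightarrow> v 0 | Suc j \<Rightarrow> v (Suc j) - (b o\<^sub>L v j))"
  have Y'ann: "Y' n \<in> ann J a" for n
  proof (cases n)
    case 0 thus ?thesis using vl av0 by (simp add: Y'_def ann_def l2_BH)
  next
    case (Suc j) thus ?thesis using vl bB avS ab
      by (simp add: Y'_def ann_def cmp.diff_right BH_diff BH_comp l2_BH flip: comp_assoc)
  qed
  have zsv: "zs b Y' k = v k" for k
  proof (induction k)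
    case 0 show ?case by (simp add: Y'_def)
  next
    case (Suc k) thus ?case by (simp add: zs_Suc Y'_def)
  qed
  hence zsv': "zs b Y' = v" by (simp add: fun_eq_iff)
  have "Y' = (\<lambda>_. 0)"
  proof (rule ccontr)
    assume "Y' \<noteq> (\<lambda>_. 0)"
    hence "a \<in> Wset J B" unfolding Wset_def zs_eta using a r Y'ann vl zsv' b_def by auto
    thus False using nW by simp
  qed
  hence "v = (\<lambda>k. 0)" using zsv' zs_zero by metis
  hence "v 0 = 0" by simp
  hence u0a: "u 0 o\<^sub>L a = id_blinfun" by (simp add: v_def shift_def e0_def)
  define \<beta> where "\<beta> = u 0"
  have uk: "u k = bpow \<beta> (Suc k)" for k
  proof (induction k)
    case 0 show ?case by (simp add: \<beta>_def bpow_Suc)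
  next
    case (Suc k)
    have "u (Suc k) = (u 0 o\<^sub>L a) o\<^sub>L u (Suc k)" by (simp add: u0a)
    also have "\<dots> = \<beta> o\<^sub>L u k" by (simp add: comp_assoc auS \<beta>_def)
    also have "\<dots> = bpow \<beta> (Suc (Suc k))" by (simp add: Suc.IH bpow_Suc[of \<beta> "Suc k"])
    finally show ?case .
  qed
  have "(\<lambda>k. bpow \<beta> (Suc k)) = u" by (simp add: uk fun_eq_iff)
  hence "(\<lambda>k. bpow \<beta> (Suc k)) \<in> l2 J" using ul by simp
  moreover have "\<beta> \<in> BH J" unfolding \<beta>_def using ul by (rule l2_BH)
  ultimately show ?thesis using au0 u0a unfolding \<beta>_def by blast
qed

lemma bpow_norm_tendsto:
  fixes \<beta> :: "'h::{real_inner,complete_space} \<Rightarrow>\<^sub>L 'h"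
  assumes "(\<lambda>k. bpow \<beta> (Suc k)) \<in> l2 J"
  shows "(\<lambda>k. norm (bpow \<beta> (Suc k))) \<longlonglongrightarrow> 0"
proof -
  let ?P = "\<lambda>k. bpow \<beta> (Suc k)"
  have "(\<lambda>k. adj (?P k) o\<^sub>L ?P k) \<longlonglongrightarrow> 0"
    using summable_LIMSEQ_zero[OF l2_summable[OF assms]] .
  hence "(\<lambda>k. sqrt (norm (adj (?P k) o\<^sub>L ?P k))) \<longlonglongrightarrow> sqrt 0"
    by (intro tendsto_intros tendsto_norm_zero)
  hence l: "(\<lambda>k. sqrt (norm (adj (?P k) o\<^sub>L ?P k))) \<longlonglongrightarrow> 0" by simp
  show ?thesis
  proof (rule real_tendsto_sandwich[OF _ _ tendsto_const l])
    show "\<forall>\<^sub>F n in sequentially. 0 \<le> norm (?P n)" by simp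
    show "\<forall>\<^sub>F n in sequentially. norm (?P n) \<le> sqrt (norm (adj (?P n) o\<^sub>L ?P n))"
      by (intro always_eventually allI real_le_rsqrt norm_sq_le_adj)
  qed
qed

lemma bpow_mult_le:
  fixes \<beta> :: "'a::real_normed_vector \<Rightarrow>\<^sub>L 'a"
  assumes "norm (bpow \<beta> p) \<le> 1/2"
  shows "norm (bpow \<beta> (p * q)) \<le> (1/2)^q"
proof (induction q)
  case 0 show ?case by (simp add: norm_blinfun_id_le)
next
  case (Suc q)
  have "norm (bpow \<beta> (p * Suc q)) = norm (bpow \<beta> p o\<^sub>L bpow \<beta> (p * q))"
    by (simp add: bpow_add)
  also have "\<dots> \<le> norm (bpow \<beta> p) * norm (bpow \<beta> (p * q))" by (rule norm_blinfun_compose)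
  also have "\<dots> \<le> 1/2 * (1/2)^q" using assms Suc.IH by (intro mult_mono) auto
  finally show ?case by simp
qed

lemma sum_blocks:
  fixes g :: "nat \<Rightarrow> real"
  shows "(\<Sum>k<p * Q. g (k div p)) = real p * (\<Sum>q<Q. g q)"
proof (induction Q)
  case 0 show ?case by simp
next
  case (Suc Q)
  show ?case
  proof (cases "p = 0")
    case True thus ?thesis by simp
  next
    case False
    have "(\<Sum>k<p * Suc Q. g (k div p)) = (\<Sum>k\<in>{0..<p*Q}. g (k div p)) + (\<Sum>k\<in>{p*Q..<p*Q+p}. g (k div p))"
      by (simp add: sum.atLeastLessThan_concat lessThan_atLeast0 algebra_simps)
    also have "(\<Sum>k\<in>{p*Q..<p*Q+p}. g (k div p)) = (\<Sum>k\<in>{p*Q..<p*Q+p}. g Q)"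
    proof (intro sum.cong refl)
      fix k assume "k \<in> {p*Q..<p*Q+p}"
      hence "k div p = Q" by (intro div_nat_eqI) auto
      thus "g (k div p) = g Q" by simp
    qed
    also have "\<dots> = real p * g Q" by simp
    finally show ?thesis using Suc.IH by (simp add: lessThan_atLeast0 algebra_simps)
  qed
qed

lemma geo_div_summable:
  assumes p: "0 < p"
  shows "summable (\<lambda>n. (1/2::real)^(n div p))"
proof (rule bounded_imp_summable)
  fix n
  have "(\<Sum>k\<le>n. (1/2::real)^(k div p)) \<le> (\<Sum>k<p * Suc n. (1/2::real)^(k div p))"
  proof (rule sum_mono2)
    have "1 * Suc n \<le> p * Suc n" using p by (intro mult_le_mono1) simp
    thus "{..n} \<subseteq> {..<p * Suc n}" by auto
  qed auto
  also have "\<dots> = real p * (\<Sum>q<Suc n. (1/2::real)^q)" by (rule sum_blocks)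
  also have "(\<Sum>q<Suc n. (1/2::real)^q) \<le> 2"
    by (simp add: sum_gp_strict)
  hence "real p * (\<Sum>q<Suc n. (1/2::real)^q) \<le> real p * 2" by (intro mult_left_mono) auto
  finally show "(\<Sum>k\<le>n. (1/2::real)^(k div p)) \<le> real p * 2" .
qed simp

lemma bpow_summable:
  fixes \<beta> :: "'a::real_normed_vector \<Rightarrow>\<^sub>L 'a"
  assumes h: "norm (bpow \<beta> p) \<le> 1/2" and p: "0 < p"
  shows "summable (\<lambda>n. norm (bpow \<beta> n))"
proof -
  define K where "K = (\<Sum>r<p. norm (bpow \<beta> r))"
  have b: "norm (bpow \<beta> n) \<le> K * (1/2)^(n div p)" for n
  proof -
    have "bpow \<beta> n = bpow \<beta> (p * (n div p)) o\<^sub>L bpow \<beta> (n mod p)"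
      by (simp add: bpow_add[symmetric])
    hence "norm (bpow \<beta> n) \<le> norm (bpow \<beta> (p * (n div p))) * norm (bpow \<beta> (n mod p))"
      by (metis norm_blinfun_compose)
    also have "\<dots> \<le> (1/2)^(n div p) * K"
    proof (intro mult_mono bpow_mult_le h)
      show "norm (bpow \<beta> (n mod p)) \<le> K" unfolding K_def
        using p by (intro member_le_sum) auto
    qed auto
    finally show ?thesis by (simp add: mult.commute)
  qed
  show ?thesis
    by (rule summable_comparison_test'[OF summable_mult[OF geo_div_summable[OF p], of K]])
       (use b in simp)
qed

lemma summable_comparison_h:
  fixes f :: "nat \<Rightarrow> 'a::real_normed_vector \<Rightarrow>\<^sub>L 'b::{real_normed_vector,complete_space}"
  assumes g: "summable g" and fg: "\<And>n. norm (f n) \<le> g n"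
  shows "summable f"
proof (rule summable_Cauchy_h, intro allI impI)
  fix e :: real assume "0 < e"
  from summable_tail_small[OF g this] obtain N where N: "\<forall>m\<ge>N. \<forall>n. norm (sum g {m..<n}) < e" by blast
  show "\<exists>N. \<forall>m\<ge>N. \<forall>n. norm (sum f {m..<n}) < e"
  proof (intro exI[of _ N] allI impI)
    fix m n assume "N \<le> m"
    have "norm (sum f {m..<n}) \<le> sum (\<lambda>k. norm (f k)) {m..<n}" by (rule norm_sum)
    also have "\<dots> \<le> sum g {m..<n}" by (intro sum_mono fg)
    also have "\<dots> \<le> norm (sum g {m..<n})" by simp
    also have "\<dots> < e" using N \<open>N \<le> m\<close> by blast
    finally show "norm (sum f {m..<n}) < e" .
  qed
qed

lemma norm_suminf_le_h:
  fixes f :: "nat \<Rightarrow> 'a::real_normed_vector"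
  assumes f: "summable f" and g: "summable g" and fg: "\<And>n. norm (f n) \<le> g n"
  shows "norm (suminf f) \<le> suminf g"
proof (rule tendsto_le[OF trivial_limit_sequentially summable_LIMSEQ[OF g]])
  show "(\<lambda>n. norm (\<Sum>i<n. f i)) \<longlonglongrightarrow> norm (suminf f)" by (intro tendsto_intros summable_LIMSEQ[OF f])
  show "\<forall>\<^sub>F n in sequentially. norm (\<Sum>i<n. f i) \<le> (\<Sum>i<n. g i)"
    by (intro always_eventually allI order_trans[OF norm_sum] sum_mono fg)
qed

lemma wCS_fin:
  fixes c f :: "'i \<Rightarrow> real"
  assumes c: "\<And>i. i \<in> I \<Longrightarrow> 0 \<le> c i"
  shows "(\<Sum>i\<in>I. c i * f i)^2 \<le> (\<Sum>i\<in>I. c i) * (\<Sum>i\<in>I. c i * (f i)^2)"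
proof -
  have "(\<Sum>i\<in>I. c i * f i) = (\<Sum>i\<in>I. sqrt (c i) * (sqrt (c i) * f i))"
    using c by (intro sum.cong refl) (simp add: mult.assoc[symmetric])
  also have "(\<dots>)^2 \<le> (\<Sum>i\<in>I. (sqrt (c i))^2) * (\<Sum>i\<in>I. (sqrt (c i) * f i)^2)"
    by (rule Cauchy_Schwarz_ineq_sum)
  also have "\<dots> = (\<Sum>i\<in>I. c i) * (\<Sum>i\<in>I. c i * (f i)^2)"
    using c by (simp add: power_mult_distrib)
  finally show ?thesis .
qed

lemma wCS_inf:
  fixes c f :: "nat \<Rightarrow> real"
  assumes c: "\<And>i. 0 \<le> c i" and sc: "summable c" and s1: "summable (\<lambda>i. c i * f i)"
    and s2: "summable (\<lambda>i. c i * (f i)^2)"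
  shows "(\<Sum>i. c i * f i)^2 \<le> (\<Sum>i. c i) * (\<Sum>i. c i * (f i)^2)"
proof (rule LIMSEQ_le)
  show "(\<lambda>n. (\<Sum>i<n. c i * f i)^2) \<longlonglongrightarrow> (\<Sum>i. c i * f i)^2"
    by (intro tendsto_intros summable_LIMSEQ s1)
  show "(\<lambda>n. (\<Sum>i<n. c i) * (\<Sum>i<n. c i * (f i)^2)) \<longlonglongrightarrow> (\<Sum>i. c i) * (\<Sum>i. c i * (f i)^2)"
    by (intro tendsto_intros summable_LIMSEQ s2 sc)
  show "\<exists>N. \<forall>n\<ge>N. (\<Sum>i<n. c i * f i)^2 \<le> (\<Sum>i<n. c i) * (\<Sum>i<n. c i * (f i)^2)"
    using c by (intro exI allI impI wCS_fin) auto
qed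

definition Tt :: "(nat \<Rightarrow> real) \<Rightarrow> nat \<Rightarrow> real" where
  "Tt c r = (\<Sum>i. c (i + r))"

lemma Tt_eq: "summable c \<Longrightarrow> Tt c r = suminf c - (\<Sum>i<r. c i)"
  unfolding Tt_def by (rule suminf_minus_initial_segment)

lemma Tt_le:
  assumes c: "\<And>i. 0 \<le> c i" and s: "summable c"
  shows "Tt c r \<le> suminf c"
  using Tt_eq[OF s, of r] c by (simp add: sum_nonneg)

lemma Tt_nonneg:
  assumes c: "\<And>i. 0 \<le> c i" and s: "summable c"
  shows "0 \<le> Tt c r"
  unfolding Tt_def using c s by (intro suminf_nonneg summable_ignore_initial_segment) auto

lemma Tt_mono:
  assumes c: "\<And>i. 0 \<le> c i" and s: "summable c" and r: "r \<le> r'"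
  shows "Tt c r' \<le> Tt c r"
proof -
  have "(\<Sum>i<r. c i) \<le> (\<Sum>i<r'. c i)" using r c by (intro sum_mono2) auto
  thus ?thesis using Tt_eq[OF s, of r] Tt_eq[OF s, of r'] by simp
qed

lemma Tt_tendsto:
  assumes s: "summable c"
  shows "Tt c \<longlonglongrightarrow> 0"
proof -
  have "(\<lambda>r. suminf c - (\<Sum>i<r. c i)) \<longlonglongrightarrow> suminf c - suminf c"
    by (intro tendsto_intros summable_LIMSEQ s)
  moreover have "Tt c = (\<lambda>r. suminf c - (\<Sum>i<r. c i))" by (rule ext) (rule Tt_eq[OF s])
  ultimately show ?thesis by simp
qed

lemma Tt_small:
  assumes s: "summable c" and e: "0 < e"
  shows "\<exists>R. \<forall>r\<ge>R. Tt c r \<le> e"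
proof -
  from Tt_tendsto[OF s] e obtain R where "\<forall>r\<ge>R. norm (Tt c r - 0) < e"
    unfolding LIMSEQ_def dist_norm by blast
  thus ?thesis by (intro exI[of _ R]) auto
qed

lemma fin_le_Tt:
  assumes c: "\<And>i. 0 \<le> c i" and s: "summable c" and K: "finite K" and inj: "inj_on f K"
    and r: "\<And>k. k \<in> K \<Longrightarrow> r \<le> f k"
  shows "(\<Sum>k\<in>K. c (f k)) \<le> Tt c r"
proof -
  have "(\<Sum>k\<in>K. c (f k)) = (\<Sum>j\<in>f ` K. c j)" using sum.reindex[OF inj, of c] by simp
  also have "\<dots> = (\<Sum>i\<in>(\<lambda>j. j - r) ` (f ` K). c (i + r))"
  proof -
    have inj2: "inj_on (\<lambda>j. j - r) (f ` K)"
    proof (rule inj_onI)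
      fix u v assume "u \<in> f ` K" "v \<in> f ` K" "u - r = v - r"
      moreover have "r \<le> u" "r \<le> v" using r \<open>u \<in> f ` K\<close> \<open>v \<in> f ` K\<close> by auto
      ultimately show "u = v" by simp
    qed
    have "(\<Sum>i\<in>(\<lambda>j. j - r) ` (f ` K). c (i + r)) = (\<Sum>j\<in>f ` K. c (j - r + r))"
      using sum.reindex[OF inj2, of "\<lambda>i. c (i + r)"] by simp
    also have "\<dots> = (\<Sum>j\<in>f ` K. c j)" using r by (intro sum.cong refl) auto
    finally show ?thesis by simp
  qed
  also have "\<dots> \<le> (\<Sum>i. c (i + r))"
    using K c by (intro sum_le_suminf summable_ignore_initial_segment s) auto
  finally show ?thesis by (simp add: Tt_def)
qed

lemma conv_tail:
  fixes c a :: "nat \<Rightarrow> real"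
  assumes c: "\<And>i. 0 \<le> c i" and s: "summable c" and a: "\<And>i. 0 \<le> a i"
  shows "(\<Sum>n\<in>{m..<p}. \<Sum>k\<le>n. c (n - k) * a k) \<le> (\<Sum>k<p. a k * Tt c (m - k))"
proof -
  have "(\<Sum>n\<in>{m..<p}. \<Sum>k\<le>n. c (n - k) * a k) = (\<Sum>n\<in>{m..<p}. \<Sum>k<p. if k \<le> n then c (n - k) * a k else 0)"
  proof (rule sum.cong[OF refl])
    fix n assume n: "n \<in> {m..<p}"
    have "(\<Sum>k<p. if k \<le> n then c (n - k) * a k else 0) = (\<Sum>k\<in>{k\<in>{..<p}. k \<le> n}. c (n - k) * a k)"
      by (rule sum.inter_filter[symmetric]) simp
    also have "{k\<in>{..<p}. k \<le> n} = {..n}" using n by auto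
    finally show "(\<Sum>k\<le>n. c (n - k) * a k) = (\<Sum>k<p. if k \<le> n then c (n - k) * a k else 0)" by simp
  qed
  also have "\<dots> = (\<Sum>k<p. \<Sum>n\<in>{m..<p}. if k \<le> n then c (n - k) * a k else 0)"
    by (rule sum.swap)
  also have "\<dots> = (\<Sum>k<p. a k * (\<Sum>n\<in>{n\<in>{m..<p}. k \<le> n}. c (n - k)))"
  proof (rule sum.cong[OF refl])
    fix k
    have "(\<Sum>n\<in>{m..<p}. if k \<le> n then c (n - k) * a k else 0) = (\<Sum>n\<in>{m..<p}. a k * (if k \<le> n then c (n - k) else 0))"
      by (intro sum.cong refl) simp
    also have "\<dots> = a k * (\<Sum>n\<in>{m..<p}. if k \<le> n then c (n - k) else 0)" by (simp add: sum_distrib_left)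
    also have "(\<Sum>n\<in>{m..<p}. if k \<le> n then c (n - k) else 0) = (\<Sum>n\<in>{n\<in>{m..<p}. k \<le> n}. c (n - k))"
      by (rule sum.inter_filter[symmetric]) simp
    finally show "(\<Sum>n\<in>{m..<p}. if k \<le> n then c (n - k) * a k else 0) = a k * (\<Sum>n\<in>{n\<in>{m..<p}. k \<le> n}. c (n - k))" .
  qed
  also have "\<dots> \<le> (\<Sum>k<p. a k * Tt c (m - k))"
  proof (intro sum_mono mult_left_mono a)
    fix k
    show "(\<Sum>n\<in>{n\<in>{m..<p}. k \<le> n}. c (n - k)) \<le> Tt c (m - k)"
      by (rule fin_le_Tt[OF c s]) (auto simp: inj_on_def)
  qed
  finally show ?thesis .
qed

lemma conv_split:
  fixes c a :: "nat \<Rightarrow> real"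
  assumes c: "\<And>i. 0 \<le> c i" and s: "summable c" and a: "\<And>i. 0 \<le> a i"
  shows "(\<Sum>k<p. a k * Tt c (m - k)) \<le> Tt c (m - M) * (\<Sum>k<M. a k) + suminf c * (\<Sum>k\<in>{M..<p}. a k)"
proof -
  have "(\<Sum>k<p. a k * Tt c (m - k)) \<le> (\<Sum>k<p. if k < M then Tt c (m - M) * a k else suminf c * a k)"
  proof (intro sum_mono)
    fix k
    show "a k * Tt c (m - k) \<le> (if k < M then Tt c (m - M) * a k else suminf c * a k)"
    proof (cases "k < M")
      case True
      have "Tt c (m - k) \<le> Tt c (m - M)" using True by (intro Tt_mono[OF c s]) auto
      hence "a k * Tt c (m - k) \<le> a k * Tt c (m - M)" using a[of k] by (rule mult_left_mono)
      thus ?thesis using True by (simp add: mult.commute)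
    next
      case False
      have "a k * Tt c (m - k) \<le> a k * suminf c" using Tt_le[OF c s, of "m - k"] a[of k] by (rule mult_left_mono)
      thus ?thesis using False by (simp add: mult.commute)
    qed
  qed
  also have "\<dots> = (\<Sum>k\<in>{..<p} \<inter> {k. k < M}. Tt c (m - M) * a k) + (\<Sum>k\<in>{..<p} \<inter> - {k. k < M}. suminf c * a k)"
    by (rule sum.If_cases) simp
  also have "\<dots> = Tt c (m - M) * (\<Sum>k\<in>{..<p} \<inter> {k. k < M}. a k) + suminf c * (\<Sum>k\<in>{..<p} \<inter> - {k. k < M}. a k)"
    by (simp add: sum_distrib_left)
  also have "\<dots> \<le> Tt c (m - M) * (\<Sum>k<M. a k) + suminf c * (\<Sum>k\<in>{M..<p}. a k)"
  proof (intro add_mono mult_left_mono)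
    show "(\<Sum>k\<in>{..<p} \<inter> {k. k < M}. a k) \<le> (\<Sum>k<M. a k)" using a by (intro sum_mono2) auto
    have "{..<p} \<inter> - {k. k < M} = {M..<p}" by auto
    thus "(\<Sum>k\<in>{..<p} \<inter> - {k. k < M}. a k) \<le> (\<Sum>k\<in>{M..<p}. a k)" by simp
    show "0 \<le> Tt c (m - M)" by (rule Tt_nonneg[OF c s])
    show "0 \<le> suminf c" using c s by (rule suminf_nonneg[rotated])
  qed
  finally show ?thesis .
qed

definition Gop :: "('h::real_normed_vector \<Rightarrow>\<^sub>L 'h) \<Rightarrow> (nat \<Rightarrow> ('h \<Rightarrow>\<^sub>L 'h)) \<Rightarrow> nat \<Rightarrow> ('h \<Rightarrow>\<^sub>L 'h)" where
  "Gop \<beta> y n = - (\<Sum>k\<le>n. bpow \<beta> (Suc (n - k)) o\<^sub>L y k)"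

lemma FG:
  assumes ab: "a o\<^sub>L \<beta> = id_blinfun"
  shows "Fop a (Gop \<beta> y) = y"
proof (rule ext)
  fix n show "Fop a (Gop \<beta> y) n = y n"
  proof (cases n)
    case 0 thus ?thesis
      by (simp add: Gop_def cmp.minus_right bpow_Suc ab flip: comp_assoc)
  next
    case (Suc n')
    have "a o\<^sub>L (\<Sum>k\<le>Suc n'. bpow \<beta> (Suc (Suc n' - k)) o\<^sub>L y k) = (\<Sum>k\<le>Suc n'. bpow \<beta> (Suc n' - k) o\<^sub>L y k)"
      unfolding cmp.sum_right by (intro sum.cong refl) (simp add: rinv_bpow[OF ab] flip: comp_assoc)
    also have "\<dots> = (\<Sum>k\<le>n'. bpow \<beta> (Suc n' - k) o\<^sub>L y k) + y (Suc n')"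
      by simp
    also have "(\<Sum>k\<le>n'. bpow \<beta> (Suc n' - k) o\<^sub>L y k) = (\<Sum>k\<le>n'. bpow \<beta> (Suc (n' - k)) o\<^sub>L y k)"
      by (intro sum.cong refl) (simp add: Suc_diff_le)
    finally have eqS: "a o\<^sub>L (\<Sum>k\<le>Suc n'. bpow \<beta> (Suc (Suc n' - k)) o\<^sub>L y k) = (\<Sum>k\<le>n'. bpow \<beta> (Suc (n' - k)) o\<^sub>L y k) + y (Suc n')" .
    have "a o\<^sub>L Gop \<beta> y (Suc n') = - (a o\<^sub>L (\<Sum>k\<le>Suc n'. bpow \<beta> (Suc (Suc n' - k)) o\<^sub>L y k))"
      by (simp only: Gop_def cmp.minus_right)
    also have "\<dots> = - ((\<Sum>k\<le>n'. bpow \<beta> (Suc (n' - k)) o\<^sub>L y k) + y (Suc n'))" by (simp only: eqS)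
    finally have eqG: "a o\<^sub>L Gop \<beta> y (Suc n') = - ((\<Sum>k\<le>n'. bpow \<beta> (Suc (n' - k)) o\<^sub>L y k) + y (Suc n'))" .
    have "Fop a (Gop \<beta> y) (Suc n') = Gop \<beta> y n' - (a o\<^sub>L Gop \<beta> y (Suc n'))" by (rule Fop_Suc)
    also have "\<dots> = - (\<Sum>k\<le>n'. bpow \<beta> (Suc (n' - k)) o\<^sub>L y k) - - ((\<Sum>k\<le>n'. bpow \<beta> (Suc (n' - k)) o\<^sub>L y k) + y (Suc n'))"
      unfolding eqG by (simp only: Gop_def)
    also have "\<dots> = y (Suc n')" by (simp add: algebra_simps)
    finally show ?thesis using Suc by simp
  qed
qed

lemma Finj:
  assumes ba: "\<beta> o\<^sub>L a = id_blinfun" and eq: "Fop a z = Fop a w"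
  shows "z = w"
proof -
  have c: "\<And>u v. a o\<^sub>L u = a o\<^sub>L v \<Longrightarrow> u = v"
  proof -
    fix u v assume "a o\<^sub>L u = a o\<^sub>L v"
    hence "(\<beta> o\<^sub>L a) o\<^sub>L u = (\<beta> o\<^sub>L a) o\<^sub>L v" by (simp add: comp_assoc)
    thus "u = v" by (simp add: ba)
  qed
  have "z k = w k" for k
  proof (induction k)
    case 0
    have "- (a o\<^sub>L z 0) = - (a o\<^sub>L w 0)" using fun_cong[OF eq, of 0] by simp
    hence "a o\<^sub>L z 0 = a o\<^sub>L w 0" by simp
    thus ?case by (rule c)
  next
    case (Suc k)
    have "z k - (a o\<^sub>L z (Suc k)) = w k - (a o\<^sub>L w (Suc k))" using fun_cong[OF eq, of "Suc k"] by simp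
    hence "a o\<^sub>L z (Suc k) = a o\<^sub>L w (Suc k)" using Suc.IH by simp
    thus ?case by (rule c)
  qed
  thus ?thesis by (simp add: fun_eq_iff)
qed

lemma G_apply_norm:
  fixes y :: "nat \<Rightarrow> 'h::real_normed_vector \<Rightarrow>\<^sub>L 'h"
  shows "norm (Gop \<beta> y n h) \<le> (\<Sum>k\<le>n. norm (bpow \<beta> (Suc (n - k))) * norm (y k h))"
proof -
  have "norm (Gop \<beta> y n h) = norm (\<Sum>k\<le>n. bpow \<beta> (Suc (n - k)) (y k h))"
    by (simp add: Gop_def blinfun.minus_left blinfun.sum_left)
  also have "\<dots> \<le> (\<Sum>k\<le>n. norm (bpow \<beta> (Suc (n - k)) (y k h)))" by (rule norm_sum)
  also have "\<dots> \<le> (\<Sum>k\<le>n. norm (bpow \<beta> (Suc (n - k))) * norm (y k h))"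
    by (intro sum_mono norm_blinfun)
  finally show ?thesis .
qed

lemma G_sq:
  fixes y :: "nat \<Rightarrow> 'h::real_normed_vector \<Rightarrow>\<^sub>L 'h" and \<beta> :: "'h \<Rightarrow>\<^sub>L 'h"
  defines "c \<equiv> \<lambda>j. norm (bpow \<beta> (Suc j))"
  assumes s: "summable c"
  shows "(norm (Gop \<beta> y n h))^2 \<le> suminf c * (\<Sum>k\<le>n. c (n - k) * (norm (y k h))^2)"
proof -
  have c0: "\<And>i. 0 \<le> c i" by (simp add: c_def)
  have "(norm (Gop \<beta> y n h))^2 \<le> (\<Sum>k\<le>n. c (n - k) * norm (y k h))^2"
    using G_apply_norm[of \<beta> y n h] by (intro power_mono) (auto simp: c_def)
  also have "\<dots> \<le> (\<Sum>k\<le>n. c (n - k)) * (\<Sum>k\<le>n. c (n - k) * (norm (y k h))^2)"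
    by (rule wCS_fin) (simp add: c0)
  also have "\<dots> \<le> suminf c * (\<Sum>k\<le>n. c (n - k) * (norm (y k h))^2)"
  proof (rule mult_right_mono)
    have "(\<Sum>k\<le>n. c (n - k)) \<le> Tt c 0"
      by (rule fin_le_Tt[OF c0 s]) (auto simp: inj_on_def)
    thus "(\<Sum>k\<le>n. c (n - k)) \<le> suminf c" by (simp add: Tt_def)
    show "0 \<le> (\<Sum>k\<le>n. c (n - k) * (norm (y k h))^2)" by (intro sum_nonneg) (simp add: c0)
  qed
  finally show ?thesis .
qed

lemma G_tail:
  fixes y :: "nat \<Rightarrow> 'h::real_normed_vector \<Rightarrow>\<^sub>L 'h" and \<beta> :: "'h \<Rightarrow>\<^sub>L 'h"
  defines "c \<equiv> \<lambda>j. norm (bpow \<beta> (Suc j))"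
  assumes s: "summable c"
  shows "(\<Sum>n\<in>{m..<p}. (norm (Gop \<beta> y n h))^2) \<le> suminf c * (\<Sum>k<p. (norm (y k h))^2 * Tt c (m - k))"
proof -
  have c0: "\<And>i. 0 \<le> c i" by (simp add: c_def)
  have "(\<Sum>n\<in>{m..<p}. (norm (Gop \<beta> y n h))^2) \<le> (\<Sum>n\<in>{m..<p}. suminf c * (\<Sum>k\<le>n. c (n - k) * (norm (y k h))^2))"
    by (intro sum_mono) (use G_sq[OF s[unfolded c_def]] in \<open>simp add: c_def\<close>)
  also have "\<dots> = suminf c * (\<Sum>n\<in>{m..<p}. \<Sum>k\<le>n. c (n - k) * (norm (y k h))^2)"
    by (simp add: sum_distrib_left)
  also have "\<dots> \<le> suminf c * (\<Sum>k<p. (norm (y k h))^2 * Tt c (m - k))"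
    by (intro mult_left_mono conv_tail[OF c0 s] suminf_nonneg s c0) auto
  finally show ?thesis .
qed

lemma G_BH:
  fixes y :: "nat \<Rightarrow> 'h::{real_inner,complete_space} \<Rightarrow>\<^sub>L 'h"
  assumes b: "\<beta> \<in> BH J" and y: "y \<in> l2 J"
  shows "Gop \<beta> y n \<in> BH J"
proof -
  have "bpow \<beta> (Suc (n - k)) o\<^sub>L y k \<in> BH J" for k using bpow_BH[OF b] l2_BH[OF y] by (rule BH_comp)
  thus ?thesis unfolding Gop_def by (intro BH_minus BH_sum)
qed

lemma G_bnd:
  fixes y :: "nat \<Rightarrow> 'h::{real_inner,complete_space} \<Rightarrow>\<^sub>L 'h" and \<beta> :: "'h \<Rightarrow>\<^sub>L 'h"
  defines "c \<equiv> \<lambda>j. norm (bpow \<beta> (Suc j))"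
  assumes s: "summable c" and y: "y \<in> l2 J"
  shows "bnd (Gop \<beta> y) ((suminf c)^2 * (hnorm y)^2)"
  unfolding bnd_def
proof (intro allI)
  fix p h
  have c0: "\<And>i. 0 \<le> c i" by (simp add: c_def)
  have C0: "0 \<le> suminf c" using c0 s by (rule suminf_nonneg[rotated])
  have "(\<Sum>n<p. (norm (Gop \<beta> y n h))^2) = (\<Sum>n\<in>{0..<p}. (norm (Gop \<beta> y n h))^2)"
    by (simp add: lessThan_atLeast0)
  also have "\<dots> \<le> suminf c * (\<Sum>k<p. (norm (y k h))^2 * Tt c (0 - k))"
    using G_tail[where \<beta>=\<beta> and y=y and m=0 and p=p and h=h] s unfolding c_def by simp
  also have "\<dots> \<le> suminf c * (\<Sum>k<p. (norm (y k h))^2 * suminf c)"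
    by (intro mult_left_mono sum_mono C0 Tt_le[OF c0 s]) simp
  also have "\<dots> = (suminf c)^2 * (\<Sum>k<p. (norm (y k h))^2)"
    by (simp add: sum_distrib_left power2_eq_square mult_ac)
  also have "\<dots> \<le> (suminf c)^2 * ((hnorm y)^2 * (norm h)^2)"
    using bnd_of_l2[OF y] unfolding bnd_def by (intro mult_left_mono) auto
  finally show "(\<Sum>n<p. (norm (Gop \<beta> y n h))^2) \<le> (suminf c)^2 * (hnorm y)^2 * (norm h)^2"
    by (simp add: mult.assoc)
qed

lemma G_usq:
  fixes y :: "nat \<Rightarrow> 'h::{real_inner,complete_space} \<Rightarrow>\<^sub>L 'h" and \<beta> :: "'h \<Rightarrow>\<^sub>L 'h"
  defines "c \<equiv> \<lambda>j. norm (bpow \<beta> (Suc j))"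
  assumes s: "summable c" and y: "y \<in> l2 J"
  shows "usq (Gop \<beta> y)"
  unfolding usq_def
proof (intro allI impI)
  fix e :: real assume e: "0 < e"
  have c0: "\<And>i. 0 \<le> c i" by (simp add: c_def)
  define C where "C = suminf c"
  have C0: "0 \<le> C" unfolding C_def using c0 s by (rule suminf_nonneg[rotated])
  define H where "H = (hnorm y)^2"
  have H0: "0 \<le> H" by (simp add: H_def)
  define e1 where "e1 = e / (2 * (C * C + 1))"
  have e1: "0 < e1" using e C0 by (simp add: e1_def add_nonneg_pos)
  define e2 where "e2 = e / (2 * (C * H + 1))"
  have e2: "0 < e2" using e C0 H0 by (simp add: e2_def add_nonneg_pos)
  obtain M where M: "\<And>m n h. M \<le> m \<Longrightarrow> (\<Sum>k\<in>{m..<n}. (norm (y k h))^2) \<le> e1 * (norm h)^2"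
    using l2_usq[OF y] e1 unfolding usq_def by meson
  obtain R where R: "\<And>r. R \<le> r \<Longrightarrow> Tt c r \<le> e2" using Tt_small[OF s e2] by blast
  show "\<exists>N. \<forall>m\<ge>N. \<forall>n h. (\<Sum>k\<in>{m..<n}. (norm (Gop \<beta> y k h))^2) \<le> e * (norm h)^2"
  proof (intro exI[of _ "M + R"] allI impI)
    fix m p h assume m: "M + R \<le> m"
    let ?a = "\<lambda>k. (norm (y k h))^2"
    have "(\<Sum>n\<in>{m..<p}. (norm (Gop \<beta> y n h))^2) \<le> C * (\<Sum>k<p. ?a k * Tt c (m - k))"
      using G_tail[where \<beta>=\<beta> and y=y and m=m and p=p and h=h] s unfolding c_def C_def by simp
    also have "\<dots> \<le> C * (Tt c (m - M) * (\<Sum>k<M. ?a k) + C * (\<Sum>k\<in>{M..<p}. ?a k))"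
    proof (rule mult_left_mono[OF _ C0])
      show "(\<Sum>k<p. ?a k * Tt c (m - k)) \<le> Tt c (m - M) * (\<Sum>k<M. ?a k) + C * (\<Sum>k\<in>{M..<p}. ?a k)"
        unfolding C_def by (rule conv_split[OF c0 s]) simp
    qed
    also have "\<dots> \<le> C * (e2 * (H * (norm h)^2) + C * (e1 * (norm h)^2))"
    proof (intro mult_left_mono add_mono mult_mono C0)
      show "Tt c (m - M) \<le> e2" using m by (intro R) auto
      show "(\<Sum>k<M. ?a k) \<le> H * (norm h)^2" using bnd_of_l2[OF y] unfolding bnd_def H_def by blast
      show "(\<Sum>k\<in>{M..<p}. ?a k) \<le> e1 * (norm h)^2" by (rule M) simp
    qed (auto intro: sum_nonneg e2[THEN less_imp_le])
    also have "\<dots> = ((C * H) * e2 + (C * C) * e1) * (norm h)^2" by (simp add: algebra_simps)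
    also have "\<dots> \<le> (e/2 + e/2) * (norm h)^2"
    proof (intro mult_right_mono add_mono)
      have "(C * H) * e2 = e/2 * ((C * H) / (C * H + 1))" by (simp add: e2_def field_simps)
      also have "\<dots> \<le> e/2 * 1" using C0 H0 e by (intro mult_left_mono) (auto simp: divide_le_eq_1 add_nonneg_pos)
      finally show "(C * H) * e2 \<le> e/2" by simp
      have "(C * C) * e1 = e/2 * ((C * C) / (C * C + 1))" by (simp add: e1_def field_simps)
      also have "\<dots> \<le> e/2 * 1" using C0 e by (intro mult_left_mono) (auto simp: divide_le_eq_1 add_nonneg_pos)
      finally show "(C * C) * e1 \<le> e/2" by simp
    qed simp
    finally show "(\<Sum>n\<in>{m..<p}. (norm (Gop \<beta> y n h))^2) \<le> e * (norm h)^2" by simp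
  qed
qed

definition Kop :: "('h::{real_inner,complete_space} \<Rightarrow>\<^sub>L 'h) \<Rightarrow> (nat \<Rightarrow> ('h \<Rightarrow>\<^sub>L 'h)) \<Rightarrow> nat \<Rightarrow> ('h \<Rightarrow>\<^sub>L 'h)" where
  "Kop \<beta> y k = - (\<Sum>j. adj (bpow \<beta> (Suc j)) o\<^sub>L y (k + j))"

lemma y_apply_le:
  fixes y :: "nat \<Rightarrow> 'h::{real_inner,complete_space} \<Rightarrow>\<^sub>L 'h"
  assumes y: "y \<in> l2 J"
  shows "norm (y n h) \<le> hnorm y * norm h"
proof -
  have "norm (y n h) \<le> norm (y n) * norm h" by (rule norm_blinfun)
  also have "\<dots> \<le> hnorm y * norm h" using norm_comp_le_hnorm[OF y] by (intro mult_right_mono) auto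
  finally show ?thesis .
qed

lemma K_summ:
  fixes y :: "nat \<Rightarrow> 'h::{real_inner,complete_space} \<Rightarrow>\<^sub>L 'h" and \<beta> :: "'h \<Rightarrow>\<^sub>L 'h"
  assumes s: "summable (\<lambda>j. norm (bpow \<beta> (Suc j)))" and y: "y \<in> l2 J"
  shows "summable (\<lambda>j. adj (bpow \<beta> (Suc j)) o\<^sub>L y (k + j))"
proof (rule summable_comparison_h[OF summable_mult2[OF s, of "hnorm y"]])
  fix j
  have "norm (adj (bpow \<beta> (Suc j)) o\<^sub>L y (k + j)) \<le> norm (adj (bpow \<beta> (Suc j))) * norm (y (k + j))"
    by (rule norm_blinfun_compose)
  also have "\<dots> \<le> norm (bpow \<beta> (Suc j)) * hnorm y"
    unfolding norm_adj by (intro mult_left_mono norm_comp_le_hnorm[OF y] norm_ge_zero)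
  finally show "norm (adj (bpow \<beta> (Suc j)) o\<^sub>L y (k + j)) \<le> norm (bpow \<beta> (Suc j)) * hnorm y" .
qed

lemma K_BH:
  fixes y :: "nat \<Rightarrow> 'h::{real_inner,complete_space} \<Rightarrow>\<^sub>L 'h" and \<beta> :: "'h \<Rightarrow>\<^sub>L 'h"
  assumes J: "cstruct J" and b: "\<beta> \<in> BH J" and s: "summable (\<lambda>j. norm (bpow \<beta> (Suc j)))" and y: "y \<in> l2 J"
  shows "Kop \<beta> y k \<in> BH J"
proof -
  have "adj (bpow \<beta> (Suc j)) o\<^sub>L y (k + j) \<in> BH J" for j
    using BH_adj[OF J bpow_BH[OF b]] l2_BH[OF y] by (rule BH_comp)
  thus ?thesis unfolding Kop_def by (intro BH_minus BH_suminf K_summ[OF s y])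
qed

lemma K_apply:
  fixes y :: "nat \<Rightarrow> 'h::{real_inner,complete_space} \<Rightarrow>\<^sub>L 'h" and \<beta> :: "'h \<Rightarrow>\<^sub>L 'h"
  assumes s: "summable (\<lambda>j. norm (bpow \<beta> (Suc j)))" and y: "y \<in> l2 J"
  shows "Kop \<beta> y k h = - (\<Sum>j. adj (bpow \<beta> (Suc j)) (y (k + j) h))"
    and "summable (\<lambda>j. adj (bpow \<beta> (Suc j)) (y (k + j) h))"
proof -
  have bl: "bounded_linear (\<lambda>T. blinfun_apply T h)" by (rule blinfun.bounded_linear_left)
  show "summable (\<lambda>j. adj (bpow \<beta> (Suc j)) (y (k + j) h))"
    using bounded_linear.summable[OF bl K_summ[OF s y, of k]] by simp
  show "Kop \<beta> y k h = - (\<Sum>j. adj (bpow \<beta> (Suc j)) (y (k + j) h))"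
    using bounded_linear.suminf[OF bl K_summ[OF s y, of k]] by (simp add: Kop_def blinfun.minus_left)
qed

lemma K_pt:
  fixes y :: "nat \<Rightarrow> 'h::{real_inner,complete_space} \<Rightarrow>\<^sub>L 'h" and \<beta> :: "'h \<Rightarrow>\<^sub>L 'h"
  defines "c \<equiv> \<lambda>j. norm (bpow \<beta> (Suc j))"
  assumes s: "summable c" and y: "y \<in> l2 J"
  shows "norm (Kop \<beta> y k h) \<le> (\<Sum>j. c j * norm (y (k + j) h))"
    and "summable (\<lambda>j. c j * norm (y (k + j) h))"
    and "summable (\<lambda>j. c j * (norm (y (k + j) h))^2)"
proof -
  have s': "summable (\<lambda>j. norm (bpow \<beta> (Suc j)))" using s by (simp add: c_def)
  have b: "norm (y n h) \<le> hnorm y * norm h" for n by (rule y_apply_le[OF y])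
  show s1: "summable (\<lambda>j. c j * norm (y (k + j) h))"
    by (rule summable_comparison_test'[OF summable_mult2[OF s, of "hnorm y * norm h"]])
       (auto simp: c_def intro!: mult_left_mono b)
  show "summable (\<lambda>j. c j * (norm (y (k + j) h))^2)"
    by (rule summable_comparison_test'[OF summable_mult2[OF s, of "(hnorm y * norm h)^2"]])
       (auto simp: c_def intro!: mult_left_mono power_mono b)
  have "norm (Kop \<beta> y k h) = norm (\<Sum>j. adj (bpow \<beta> (Suc j)) (y (k + j) h))"
    by (simp add: K_apply(1)[OF s' y])
  also have "\<dots> \<le> (\<Sum>j. c j * norm (y (k + j) h))"
  proof (rule norm_suminf_le_h[OF K_apply(2)[OF s' y] s1])
    fix j
    show "norm (adj (bpow \<beta> (Suc j)) (y (k + j) h)) \<le> c j * norm (y (k + j) h)"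
      using norm_blinfun[of "adj (bpow \<beta> (Suc j))" "y (k + j) h"] by (simp add: c_def)
  qed
  finally show "norm (Kop \<beta> y k h) \<le> (\<Sum>j. c j * norm (y (k + j) h))" .
qed

lemma K_sq:
  fixes y :: "nat \<Rightarrow> 'h::{real_inner,complete_space} \<Rightarrow>\<^sub>L 'h" and \<beta> :: "'h \<Rightarrow>\<^sub>L 'h"
  defines "c \<equiv> \<lambda>j. norm (bpow \<beta> (Suc j))"
  assumes s: "summable c" and y: "y \<in> l2 J"
  shows "(norm (Kop \<beta> y k h))^2 \<le> suminf c * (\<Sum>j. c j * (norm (y (k + j) h))^2)"
proof -
  have s': "summable (\<lambda>j. norm (bpow \<beta> (Suc j)))" using s by (simp add: c_def)
  have kp1: "norm (Kop \<beta> y k h) \<le> (\<Sum>j. c j * norm (y (k + j) h))" for k h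
    using K_pt(1)[OF s' y] by (simp add: c_def)
  have kp2: "summable (\<lambda>j. c j * norm (y (k + j) h))" for k h
    using K_pt(2)[OF s' y] by (simp add: c_def)
  have kp3: "summable (\<lambda>j. c j * (norm (y (k + j) h))^2)" for k h
    using K_pt(3)[OF s' y] by (simp add: c_def)
  have "(norm (Kop \<beta> y k h))^2 \<le> (\<Sum>j. c j * norm (y (k + j) h))^2"
    using kp1 by (intro power_mono) auto
  also have "\<dots> \<le> suminf c * (\<Sum>j. c j * (norm (y (k + j) h))^2)"
    by (rule wCS_inf[OF _ s kp2 kp3]) (simp add: c_def)
  finally show ?thesis .
qed

lemma K_tail:
  fixes y :: "nat \<Rightarrow> 'h::{real_inner,complete_space} \<Rightarrow>\<^sub>L 'h" and \<beta> :: "'h \<Rightarrow>\<^sub>L 'h"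
  defines "c \<equiv> \<lambda>j. norm (bpow \<beta> (Suc j))"
  assumes s: "summable c" and y: "y \<in> l2 J"
    and E: "\<And>j. (\<Sum>k\<in>{m..<p}. (norm (y (k + j) h))^2) \<le> E"
  shows "(\<Sum>k\<in>{m..<p}. (norm (Kop \<beta> y k h))^2) \<le> suminf c * (suminf c * E)"
proof -
  have s': "summable (\<lambda>j. norm (bpow \<beta> (Suc j)))" using s by (simp add: c_def)
  have kp1: "norm (Kop \<beta> y k h) \<le> (\<Sum>j. c j * norm (y (k + j) h))" for k h
    using K_pt(1)[OF s' y] by (simp add: c_def)
  have kp2: "summable (\<lambda>j. c j * norm (y (k + j) h))" for k h
    using K_pt(2)[OF s' y] by (simp add: c_def)
  have kp3: "summable (\<lambda>j. c j * (norm (y (k + j) h))^2)" for k h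
    using K_pt(3)[OF s' y] by (simp add: c_def)
  have ksq: "(norm (Kop \<beta> y k h))^2 \<le> suminf c * (\<Sum>j. c j * (norm (y (k + j) h))^2)" for k
    using K_sq[OF s' y] by (simp add: c_def)
  have c0: "\<And>j. 0 \<le> c j" by (simp add: c_def)
  have "(\<Sum>k\<in>{m..<p}. (norm (Kop \<beta> y k h))^2) \<le> (\<Sum>k\<in>{m..<p}. suminf c * (\<Sum>j. c j * (norm (y (k + j) h))^2))"
    by (intro sum_mono ksq)
  also have "\<dots> = suminf c * (\<Sum>k\<in>{m..<p}. \<Sum>j. c j * (norm (y (k + j) h))^2)"
    by (simp add: sum_distrib_left)
  also have "(\<Sum>k\<in>{m..<p}. \<Sum>j. c j * (norm (y (k + j) h))^2) = (\<Sum>j. \<Sum>k\<in>{m..<p}. c j * (norm (y (k + j) h))^2)"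
    by (rule suminf_sum[symmetric]) (rule kp3)
  also have "\<dots> \<le> (\<Sum>j. c j * E)"
  proof (rule suminf_le)
    fix j
    show "(\<Sum>k\<in>{m..<p}. c j * (norm (y (k + j) h))^2) \<le> c j * E"
      using E[of j] c0[of j] by (simp add: sum_distrib_left[symmetric] mult_left_mono)
    show "summable (\<lambda>j. \<Sum>k\<in>{m..<p}. c j * (norm (y (k + j) h))^2)"
      by (rule summable_sum) (rule kp3)
    show "summable (\<lambda>j. c j * E)" by (rule summable_mult2[OF s])
  qed
  also have "(\<Sum>j. c j * E) = suminf c * E" by (rule suminf_mult2[OF s, symmetric])
  finally show ?thesis using s c0 by (simp add: mult_left_mono suminf_nonneg)
qed

lemma K_l2:
  fixes y :: "nat \<Rightarrow> 'h::{real_inner,complete_space} \<Rightarrow>\<^sub>L 'h" and \<beta> :: "'h \<Rightarrow>\<^sub>L 'h"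
  assumes J: "cstruct J" and b: "\<beta> \<in> BH J" and s: "summable (\<lambda>j. norm (bpow \<beta> (Suc j)))" and y: "y \<in> l2 J"
  shows "Kop \<beta> y \<in> l2 J"
proof (rule l2I)
  show "Kop \<beta> y k \<in> BH J" for k by (rule K_BH[OF J b s y])
  show "usq (Kop \<beta> y)"
    unfolding usq_def
  proof (intro allI impI)
    fix e :: real assume e: "0 < e"
    define C where "C = (\<Sum>j. norm (bpow \<beta> (Suc j)))"
    have C0: "0 \<le> C" unfolding C_def using s by (intro suminf_nonneg) auto
    define e' where "e' = e / (C * C + 1)"
    have e': "0 < e'" using e C0 by (simp add: e'_def add_nonneg_pos)
    obtain N where N: "\<And>m n h. N \<le> m \<Longrightarrow> (\<Sum>k\<in>{m..<n}. (norm (y k h))^2) \<le> e' * (norm h)^2"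
      using l2_usq[OF y] e' unfolding usq_def by meson
    show "\<exists>N. \<forall>m\<ge>N. \<forall>n h. (\<Sum>k\<in>{m..<n}. (norm (Kop \<beta> y k h))^2) \<le> e * (norm h)^2"
    proof (intro exI[of _ N] allI impI)
      fix m p h assume m: "N \<le> m"
      have E: "(\<Sum>k\<in>{m..<p}. (norm (y (k + j) h))^2) \<le> e' * (norm h)^2" for j
      proof -
        have "(\<Sum>k\<in>{m..<p}. (norm (y (k + j) h))^2) = (\<Sum>k\<in>{m + j..<p + j}. (norm (y k h))^2)"
          by (rule sum.shift_bounds_nat_ivl[symmetric])
        also have "\<dots> \<le> e' * (norm h)^2" using m by (intro N) auto
        finally show ?thesis .
      qed
      have "(\<Sum>k\<in>{m..<p}. (norm (Kop \<beta> y k h))^2) \<le> C * (C * (e' * (norm h)^2))"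
        using K_tail[OF s y E] by (simp add: C_def)
      also have "\<dots> = (C * C) * e' * (norm h)^2" by (simp add: algebra_simps)
      also have "\<dots> \<le> e * (norm h)^2"
      proof (rule mult_right_mono)
        have "(C * C) * e' = e * ((C * C) / (C * C + 1))" by (simp add: e'_def field_simps)
        also have "\<dots> \<le> e * 1" using C0 e by (intro mult_left_mono) (auto simp: divide_le_eq_1 add_nonneg_pos)
        finally show "(C * C) * e' \<le> e" by simp
      qed simp
      finally show "(\<Sum>k\<in>{m..<p}. (norm (Kop \<beta> y k h))^2) \<le> e * (norm h)^2" .
    qed
  qed
qed

lemma Fadj_K:
  fixes y :: "nat \<Rightarrow> 'h::{real_inner,complete_space} \<Rightarrow>\<^sub>L 'h" and \<beta> :: "'h \<Rightarrow>\<^sub>L 'h"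
  assumes ba: "\<beta> o\<^sub>L a = id_blinfun" and s: "summable (\<lambda>j. norm (bpow \<beta> (Suc j)))" and y: "y \<in> l2 J"
  shows "Fadj a (Kop \<beta> y) = y"
proof (rule ext)
  fix k
  define g where "g = (\<lambda>j. adj (bpow \<beta> j) o\<^sub>L y (k + j))"
  have gS: "g (Suc j) = adj (bpow \<beta> (Suc j)) o\<^sub>L y (Suc k + j)" for j by (simp add: g_def)
  have sg: "summable g"
  proof -
    have "summable (\<lambda>j. g (Suc j))" unfolding gS by (rule K_summ[OF s y])
    thus ?thesis by (simp only: summable_Suc_iff)
  qed
  have adjc: "adj a o\<^sub>L adj (bpow \<beta> (Suc j)) = adj (bpow \<beta> j)" for j
  proof -
    have "bpow \<beta> (Suc j) o\<^sub>L a = bpow \<beta> j" by (simp add: bpow_Suc' comp_assoc ba)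
    thus ?thesis by (simp add: adj_comp[symmetric])
  qed
  have "adj a o\<^sub>L Kop \<beta> y k = - (\<Sum>j. adj a o\<^sub>L (adj (bpow \<beta> (Suc j)) o\<^sub>L y (k + j)))"
    unfolding Kop_def cmp.minus_right
    using bounded_linear.suminf[OF cmp.bounded_linear_right K_summ[OF s y, of k]] by simp
  also have "\<dots> = - suminf g"
    by (simp add: g_def adjc flip: comp_assoc)
  also have "suminf g = g 0 + (\<Sum>j. g (Suc j))" using suminf_split_head[OF sg] by simp
  also have "(\<Sum>j. g (Suc j)) = - Kop \<beta> y (Suc k)" unfolding gS Kop_def by simp
  also have "g 0 = y k" by (simp add: g_def)
  finally have e: "adj a o\<^sub>L Kop \<beta> y k = - (y k + - Kop \<beta> y (Suc k))" .
  show "Fadj a (Kop \<beta> y) k = y k" by (simp add: Fadj_def e)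
qed


lemma G_l2:
  fixes y :: "nat \<Rightarrow> 'h::{real_inner,complete_space} \<Rightarrow>\<^sub>L 'h" and \<beta> :: "'h \<Rightarrow>\<^sub>L 'h"
  assumes b: "\<beta> \<in> BH J" and s: "summable (\<lambda>j. norm (bpow \<beta> (Suc j)))" and y: "y \<in> l2 J"
  shows "Gop \<beta> y \<in> l2 J"
  by (rule l2I[OF G_BH[OF b y] G_usq[OF s y]])

lemma badj_G:
  fixes J \<beta> a :: "'h::{real_inner,complete_space} \<Rightarrow>\<^sub>L 'h"
  assumes J: "cstruct J" and a: "a \<in> BH J" and b: "\<beta> \<in> BH J"
    and ab: "a o\<^sub>L \<beta> = id_blinfun" and ba: "\<beta> o\<^sub>L a = id_blinfun"
    and s: "summable (\<lambda>j. norm (bpow \<beta> (Suc j)))"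
  shows "badj J (Gop \<beta>)"
  unfolding badj_def
proof (intro conjI ballI)
  fix x assume "x \<in> l2 J" thus "Gop \<beta> x \<in> l2 J" by (rule G_l2[OF b s])
next
  fix x y :: "nat \<Rightarrow> 'h \<Rightarrow>\<^sub>L 'h"
  show "Gop \<beta> (\<lambda>k. x k + y k) = (\<lambda>k. Gop \<beta> x k + Gop \<beta> y k)"
    by (simp add: fun_eq_iff Gop_def cmp.add_right sum.distrib)
next
  fix x :: "nat \<Rightarrow> 'h \<Rightarrow>\<^sub>L 'h" and c
  show "Gop \<beta> (\<lambda>k. x k o\<^sub>L c) = (\<lambda>k. Gop \<beta> x k o\<^sub>L c)"
    by (simp add: fun_eq_iff Gop_def cmp.minus_left cmp.sum_left comp_assoc)
next
  show "\<exists>C. \<forall>x\<in>l2 J. hnorm (Gop \<beta> x) \<le> C * hnorm x"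
  proof (intro exI ballI)
    fix x assume x: "x \<in> l2 J"
    define C where "C = (\<Sum>j. norm (bpow \<beta> (Suc j)))"
    have C0: "0 \<le> C" unfolding C_def using s by (intro suminf_nonneg) auto
    have "hnorm (Gop \<beta> x) \<le> sqrt (C^2 * (hnorm x)^2)"
      using hnorm_le[OF G_l2[OF b s x] G_bnd[OF s x]] by (simp add: C_def)
    also have "\<dots> = C * hnorm x" using C0 hnorm_nonneg[of x] by (simp add: real_sqrt_mult)
    finally show "hnorm (Gop \<beta> x) \<le> (\<Sum>j. norm (bpow \<beta> (Suc j))) * hnorm x" by (simp add: C_def)
  qed
next
  show "\<exists>G. (\<forall>y\<in>l2 J. G y \<in> l2 J) \<and> (\<forall>x\<in>l2 J. \<forall>y\<in>l2 J. ip (Gop \<beta> x) y = ip x (G y))"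
  proof (intro exI conjI ballI)
    fix y assume y: "y \<in> l2 J"
    show "Kop \<beta> y \<in> l2 J" by (rule K_l2[OF J b s y])
  next
    fix x y assume x: "x \<in> l2 J" and y: "y \<in> l2 J"
    have "ip (Gop \<beta> x) y = ip (Gop \<beta> x) (Fadj a (Kop \<beta> y))" by (simp add: Fadj_K[OF ba s y])
    also have "\<dots> = ip (Fop a (Gop \<beta> x)) (Kop \<beta> y)"
      by (rule Fop_ip[OF J a G_l2[OF b s x] K_l2[OF J b s y], symmetric])
    also have "\<dots> = ip x (Kop \<beta> y)" by (simp add: FG[OF ab])
    finally show "ip (Gop \<beta> x) y = ip x (Kop \<beta> y)" .
  qed
qed

lemma main_inv:
  fixes J \<beta> a :: "'h::{real_inner,complete_space} \<Rightarrow>\<^sub>L 'h"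
  assumes J: "cstruct J" and a: "a \<in> BH J" and b: "\<beta> \<in> BH J"
    and ab: "a o\<^sub>L \<beta> = id_blinfun" and ba: "\<beta> o\<^sub>L a = id_blinfun"
    and l: "(\<lambda>k. bpow \<beta> (Suc k)) \<in> l2 J"
  shows "binv J (Fop a)"
proof -
  have "(\<lambda>k. norm (bpow \<beta> (Suc k))) \<longlonglongrightarrow> 0" by (rule bpow_norm_tendsto[OF l])
  then obtain N where N: "\<forall>n\<ge>N. norm (norm (bpow \<beta> (Suc n)) - 0) < 1/2"
    unfolding LIMSEQ_def dist_norm by (meson half_gt_zero zero_less_one)
  hence "norm (bpow \<beta> (Suc N)) \<le> 1/2" by auto
  hence "summable (\<lambda>n. norm (bpow \<beta> n))" by (rule bpow_summable) simp
  hence s: "summable (\<lambda>j. norm (bpow \<beta> (Suc j)))"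
    using summable_Suc_iff[of "\<lambda>n. norm (bpow \<beta> n)"] by simp
  show ?thesis unfolding binv_def
  proof (intro conjI exI[of _ "Gop \<beta>"] ballI)
    show "badj J (Fop a)" by (rule badj_Fop[OF J a])
    show "badj J (Gop \<beta>)" by (rule badj_G[OF J a b ab ba s])
    fix x assume x: "x \<in> l2 J"
    show "Gop \<beta> (Fop a x) = x" by (rule Finj[OF ba]) (simp add: FG[OF ab])
    show "Fop a (Gop \<beta> x) = x" by (rule FG[OF ab])
  qed
qed

theorem proposition2p3:
  fixes J :: "'h::{real_inner,complete_space} \<Rightarrow>\<^sub>L 'h"
    and B :: "('h \<Rightarrow>\<^sub>L 'h) \<Rightarrow> ('h \<Rightarrow>\<^sub>L 'h)"
  assumes "cstruct J"
    and "\<forall>T\<in>BH J. rinv J T \<longrightarrow> B T \<in> BH J \<and> T o\<^sub>L B T = id_blinfun"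
  shows "Aspec J shift = Zset J B \<union> Wset J B \<union> {T \<in> BH J. \<not> rinv J T}"
proof
  show "Zset J B \<union> Wset J B \<union> {T \<in> BH J. \<not> rinv J T} \<subseteq> Aspec J shift"
    using Z_spec[OF assms(2)] W_spec[OF assms(2)] notrinv_spec by blast
  show "Aspec J shift \<subseteq> Zset J B \<union> Wset J B \<union> {T \<in> BH J. \<not> rinv J T}"
  proof
    fix a assume aS: "a \<in> Aspec J shift"
    hence a: "a \<in> BH J" and nb: "\<not> binv J (Fop a)" by (auto simp: Aspec_iff)
    show "a \<in> Zset J B \<union> Wset J B \<union> {T \<in> BH J. \<not> rinv J T}"
    proof (rule ccontr)
      assume "a \<notin> Zset J B \<union> Wset J B \<union> {T \<in> BH J. \<not> rinv J T}"
      hence nZ: "a \<notin> Zset J B" and nW: "a \<notin> Wset J B" and r: "rinv J a" using a by auto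
      obtain \<beta> where "\<beta> \<in> BH J" "a o\<^sub>L \<beta> = id_blinfun" "\<beta> o\<^sub>L a = id_blinfun" "(\<lambda>k. bpow \<beta> (Suc k)) \<in> l2 J"
        using dir2_reduce[OF assms(2) a r nW nZ] by blast
      hence "binv J (Fop a)" by (intro main_inv[OF assms(1) a])
      thus False using nb by simp
    qed
  qed
qed

end
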